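(* Let $K$ be a field and $(Q,f,g,c,W)$ as in the setting below, with completed Jacobian algebra $\Lambda$, and assume that either $Q$ satisfies $(\star)$, or $Q$ satisfies $(\diamond)$ and $\prod_{\alpha\in\Omega}c_\alpha\neq1$ for $\Omega$ a set of representatives of the $g$-orbits. Then for every arrow $\alpha\in Q_1$, $$\alpha\cdot f(\alpha)\cdot f^2(\alpha)\cdot\alpha=0\quad\text{and}\quad \alpha\cdot g(\alpha)\cdots g^{n_\alpha-1}(\alpha)\cdot\alpha=0\quad\text{in }\Lambda.$$
   Context: Setting: $Q$ is a finite quiver with vertex set $Q_0$ and arrow set $Q_1$, connected, without loops or $2$-cycles, every vertex being the source of exactly two arrows and the target of exactly two arrows, equipped with bijections $f,g:Q_1\to Q_1$ such that for each $\alpha$, $\{f(\alpha),g(\alpha)\}$ is the set of the two arrows starting at the target of $\alpha$, and $f^3=\mathrm{id}$. $n_\alpha$ is the size of the $g$-orbit of $\alpha$. $c:Q_1\to K^\times$ is constant on $g$-orbits. Paths compose left to right ($\alpha\cdot\beta$ is $\alpha$ followed by $\beta$). $W=\sum_\alpha \alpha\cdot f(\alpha)\cdot f^2(\alpha)-\sum_\beta c_\beta\,\beta\cdot g(\beta)\cdots g^{n_\beta-1}(\beta)$ (sums over representatives of $f$-orbits, resp. $g$-orbits). $\Lambda=\widehat{KQ}/\overline{(\partial_\alpha W:\alpha\in Q_1)}$ is the completed Jacobian algebra. $(\star)$: for every $\alpha$, $n_\alpha\ge4$ or $n_{f(\alpha)}\ge4$. $(\diamond)$: $n_\alpha=3$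 for all $\alpha$. *)

theory Defs
  imports Main
begin

text \<open>Paths in a quiver (Q0,Q1,s,t) are pairs (v, p): a starting vertex v and a list of
 arrows p, composed left to right. (v, []) is the trivial path e_v.
 Elements of the completed path algebra are functions from paths to K supported on
 valid paths (arbitrary, possibly infinite, formal linear combinations).\<close>

definition endpt :: "('a \<Rightarrow> 'v) \<Rightarrow> 'v \<Rightarrow> 'a list \<Rightarrow> 'v" where
  "endpt t v p = (if p = [] then v else t (last p))"

fun composable :: "('a \<Rightarrow> 'v) \<Rightarrow> ('a \<Rightarrow> 'v) \<Rightarrow> 'v \<Rightarrow> 'a list \<Rightarrow> bool" where
  "composable s t v [] = True"
| "composable s t v (a # p) = (s a = v \<and> composable s t (t a) p)"

definition valid_path :: "'v set \<Rightarrow> 'a set \<Rightarrow> ('a \<Rightarrow> 'v) \<Rightarrow> ('a \<Rightarrow> 'v) \<Rightarrow> 'v \<times> 'a list \<Rightarrow> bool" where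
  "valid_path Q0 Q1 s t q = (fst q \<in> Q0 \<and> set (snd q) \<subseteq> Q1 \<and> composable s t (fst q) (snd q))"

definition compl_alg :: "'v set \<Rightarrow> 'a set \<Rightarrow> ('a \<Rightarrow> 'v) \<Rightarrow> ('a \<Rightarrow> 'v) \<Rightarrow> ('v \<times> 'a list \<Rightarrow> 'k::field) set" where
  "compl_alg Q0 Q1 s t = {x. \<forall>q. \<not> valid_path Q0 Q1 s t q \<longrightarrow> x q = 0}"

definition pmul :: "('a \<Rightarrow> 'v) \<Rightarrow> ('v \<times> 'a list \<Rightarrow> 'k::field) \<Rightarrow> ('v \<times> 'a list \<Rightarrow> 'k) \<Rightarrow> ('v \<times> 'a list \<Rightarrow> 'k)" where
  "pmul t x y = (\<lambda>q. \<Sum>k\<in>{0..length (snd q)}.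
      x (fst q, take k (snd q)) * y (endpt t (fst q) (take k (snd q)), drop k (snd q)))"

definition mon :: "'v \<times> 'a list \<Rightarrow> ('v \<times> 'a list \<Rightarrow> 'k::field)" where
  "mon q = (\<lambda>q'. if q' = q then 1 else 0)"

inductive_set gen_ideal :: "'v set \<Rightarrow> 'a set \<Rightarrow> ('a \<Rightarrow> 'v) \<Rightarrow> ('a \<Rightarrow> 'v)
    \<Rightarrow> ('v \<times> 'a list \<Rightarrow> 'k::field) set \<Rightarrow> ('v \<times> 'a list \<Rightarrow> 'k) set"
  for Q0 Q1 s t R where
  zero: "(\<lambda>_. 0) \<in> gen_ideal Q0 Q1 s t R"
| gen: "r \<in> R \<Longrightarrow> a \<in> compl_alg Q0 Q1 s t \<Longrightarrow> b \<in> compl_alg Q0 Q1 s t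
        \<Longrightarrow> pmul t (pmul t a r) b \<in> gen_ideal Q0 Q1 s t R"
| add: "x \<in> gen_ideal Q0 Q1 s t R \<Longrightarrow> y \<in> gen_ideal Q0 Q1 s t R
        \<Longrightarrow> (\<lambda>q. x q + y q) \<in> gen_ideal Q0 Q1 s t R"

text \<open>Closure in the arrow-ideal-adic topology: x is in the closure of I iff for every N
 there is y in I agreeing with x on all paths of length < N (i.e. x - y in m^N).\<close>
definition madic_closure :: "('v \<times> 'a list \<Rightarrow> 'k::field) set \<Rightarrow> ('v \<times> 'a list \<Rightarrow> 'k) set" where
  "madic_closure I = {x. \<forall>N. \<exists>y\<in>I. \<forall>q. length (snd q) < N \<longrightarrow> x q = y q}"

text \<open>Cyclic derivative with respect to an arrow alpha of a potential x (a combination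
 of cycles): the coefficient of q in the derivative is the sum of the coefficients of
 all cyclic rotations of the cycle alpha q.\<close>
definition cder :: "'v set \<Rightarrow> 'a set \<Rightarrow> ('a \<Rightarrow> 'v) \<Rightarrow> ('a \<Rightarrow> 'v) \<Rightarrow> 'a
    \<Rightarrow> ('v \<times> 'a list \<Rightarrow> 'k::field) \<Rightarrow> ('v \<times> 'a list \<Rightarrow> 'k)" where
  "cder Q0 Q1 s t \<alpha> x = (\<lambda>q.
     if fst q = t \<alpha> \<and> valid_path Q0 Q1 s t (s \<alpha>, \<alpha> # snd q)
        \<and> endpt t (s \<alpha>) (\<alpha> # snd q) = s \<alpha>
     then (\<Sum>j<Suc (length (snd q)). x (s (hd (rotate j (\<alpha> # snd q))), rotate j (\<alpha> # snd q)))
     else 0)"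

definition orbit :: "('a \<Rightarrow> 'a) \<Rightarrow> 'a \<Rightarrow> 'a set" where
  "orbit h \<alpha> = range (\<lambda>k. (h ^^ k) \<alpha>)"

definition orbsize :: "('a \<Rightarrow> 'a) \<Rightarrow> 'a \<Rightarrow> nat" where
  "orbsize h \<alpha> = card (orbit h \<alpha>)"

definition is_orbit_reps :: "('a \<Rightarrow> 'a) \<Rightarrow> 'a set \<Rightarrow> 'a set \<Rightarrow> bool" where
  "is_orbit_reps h Q1 \<Omega> = (\<Omega> \<subseteq> Q1 \<and> (\<forall>\<alpha>\<in>Q1. \<exists>!\<omega>. \<omega> \<in> \<Omega> \<and> \<omega> \<in> orbit h \<alpha>))"

definition gcycle :: "('a \<Rightarrow> 'a) \<Rightarrow> 'a \<Rightarrow> 'a list" where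
  "gcycle g \<alpha> = map (\<lambda>k. (g ^^ k) \<alpha>) [0..<orbsize g \<alpha>]"

definition potential :: "('a \<Rightarrow> 'v) \<Rightarrow> ('a \<Rightarrow> 'a) \<Rightarrow> ('a \<Rightarrow> 'a) \<Rightarrow> ('a \<Rightarrow> 'k::field)
    \<Rightarrow> 'a set \<Rightarrow> 'a set \<Rightarrow> ('v \<times> 'a list \<Rightarrow> 'k)" where
  "potential s f g c \<Omega>f \<Omega>g = (\<lambda>q.
      (\<Sum>\<omega>\<in>\<Omega>f. mon (s \<omega>, [\<omega>, f \<omega>, f (f \<omega>)]) q)
    - (\<Sum>\<omega>\<in>\<Omega>g. c \<omega> * mon (s \<omega>, gcycle g \<omega>) q))"

text \<open>Kernel of the projection onto the completed Jacobian algebra: the closure of the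
 ideal generated by all cyclic derivatives of W.\<close>
definition jac_kernel :: "'v set \<Rightarrow> 'a set \<Rightarrow> ('a \<Rightarrow> 'v) \<Rightarrow> ('a \<Rightarrow> 'v)
    \<Rightarrow> ('v \<times> 'a list \<Rightarrow> 'k::field) \<Rightarrow> ('v \<times> 'a list \<Rightarrow> 'k) set" where
  "jac_kernel Q0 Q1 s t W = madic_closure (gen_ideal Q0 Q1 s t {cder Q0 Q1 s t \<alpha> W | \<alpha>. \<alpha> \<in> Q1})"

end

theory Submission
  imports Defs
begin

lemma orb_period:
  assumes b: "bij_betw h S S" and fin: "finite S" and y: "y \<in> S"
  shows "\<exists>m>0. (h ^^ m) y = y"
proof -
  have sub: "(\<lambda>k. (h ^^ k) y) ` {0..card S} \<subseteq> S"
    using bij_betw_funpow[OF b] y by (auto simp: bij_betw_def)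
  have "card ((\<lambda>k. (h ^^ k) y) ` {0..card S}) \<le> card S" using card_mono[OF fin sub] .
  hence "\<not> inj_on (\<lambda>k. (h ^^ k) y) {0..card S}" using pigeonhole[of "\<lambda>k. (h ^^ k) y" "{0..card S}"] by simp
  then obtain i j where ij: "i \<le> card S" "j \<le> card S" "i \<noteq> j" "(h ^^ i) y = (h ^^ j) y"
    unfolding inj_on_def by auto
  { fix i j assume ij: "i < j" "(h ^^ i) y = (h ^^ j) y"
    have "(h ^^ i) ((h ^^ (j - i)) y) = (h ^^ (i + (j - i))) y"
      by (simp add: funpow_add)
    also have "\<dots> = (h ^^ i) y" using ij by simp
    finally have "(h ^^ i) ((h ^^ (j - i)) y) = (h ^^ i) y" .
    moreover have "inj_on (h ^^ i) S" using bij_betw_funpow[OF b] by (auto simp: bij_betw_def)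
    moreover have "(h ^^ (j - i)) y \<in> S" using bij_betw_funpow[OF b] y by (auto simp: bij_betw_def)
    ultimately have "(h ^^ (j - i)) y = y" using y by (auto dest: inj_onD)
    hence "\<exists>m>0. (h ^^ m) y = y" using ij by (intro exI[of _ "j - i"]) auto }
  then show ?thesis using ij by (cases "i < j") (auto, metis linorder_neqE_nat)
qed

lemma fpa: "(h ^^ (m + n)) y = (h ^^ m) ((h ^^ n) y)"
  by (simp add: funpow_add)

lemma fps: "(h ^^ k) (h y) = (h ^^ Suc k) y"
  by (metis comp_apply funpow_Suc_right)

lemma funpow_period_mult:
  assumes "(h ^^ p) y = y" shows "(h ^^ (p * q)) y = y"
proof (induction q)
  case 0 then show ?case by simp
next
  case (Suc q)
  have "(h ^^ (p * Suc q)) y = (h ^^ (p * q)) ((h ^^ p) y)"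
    using fpa[where h=h and m="p * q" and n=p and y=y] by (simp add: add.commute)
  then show ?case using Suc assms by simp
qed

lemma funpow_mod_period:
  assumes "(h ^^ p) y = y" shows "(h ^^ k) y = (h ^^ (k mod p)) y"
proof -
  have "(h ^^ k) y = (h ^^ (k mod p + p * (k div p))) y" by simp
  also have "\<dots> = (h ^^ (k mod p)) ((h ^^ (p * (k div p))) y)" by (rule fpa)
  also have "\<dots> = (h ^^ (k mod p)) y" using funpow_period_mult[OF assms] by simp
  finally show ?thesis .
qed

lemma orb_facts:
  assumes b: "bij_betw h S S" and fin: "finite S" and y: "y \<in> S"
  shows "0 < orbsize h y" "(h ^^ orbsize h y) y = y"
    "orbit h y = (\<lambda>k. (h ^^ k) y) ` {0..<orbsize h y}"
    "inj_on (\<lambda>k. (h ^^ k) y) {0..<orbsize h y}"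
    "\<And>k. (h ^^ k) y = (h ^^ (k mod orbsize h y)) y"
    "\<And>m. 0 < m \<Longrightarrow> m < orbsize h y \<Longrightarrow> (h ^^ m) y \<noteq> y"
proof -
  define p where "p = (LEAST m. 0 < m \<and> (h ^^ m) y = y)"
  have ex: "\<exists>m. 0 < m \<and> (h ^^ m) y = y" using orb_period[OF b fin y] by blast
  have p: "0 < p" "(h ^^ p) y = y" using LeastI_ex[OF ex] unfolding p_def by auto
  have pl: "\<And>m. 0 < m \<Longrightarrow> m < p \<Longrightarrow> (h ^^ m) y \<noteq> y"
    using not_less_Least unfolding p_def by blast
  have inj: "inj_on (\<lambda>k. (h ^^ k) y) {0..<p}" by (rule inj_on_funpow_least[OF p(2) pl])
  have md: "\<And>k. (h ^^ k) y = (h ^^ (k mod p)) y" by (rule funpow_mod_period[OF p(2)])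
  have orb: "orbit h y = (\<lambda>k. (h ^^ k) y) ` {0..<p}"
  proof
    show "orbit h y \<subseteq> (\<lambda>k. (h ^^ k) y) ` {0..<p}"
      unfolding orbit_def using md p(1) by (auto intro!: image_eqI[where x="_ mod p"])
  qed (auto simp: orbit_def)
  have n: "orbsize h y = p" unfolding orbsize_def orb using card_image[OF inj] by simp
  show "0 < orbsize h y" "(h ^^ orbsize h y) y = y"
    "orbit h y = (\<lambda>k. (h ^^ k) y) ` {0..<orbsize h y}"
    "inj_on (\<lambda>k. (h ^^ k) y) {0..<orbsize h y}"
    "\<And>k. (h ^^ k) y = (h ^^ (k mod orbsize h y)) y"
    "\<And>m. 0 < m \<Longrightarrow> m < orbsize h y \<Longrightarrow> (h ^^ m) y \<noteq> y"
    using p inj md orb pl unfolding n by auto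
qed

lemma orbit_step: "orbit h (h y) \<subseteq> orbit h y"
proof
  fix z assume "z \<in> orbit h (h y)"
  then obtain k where "z = (h ^^ k) (h y)" unfolding orbit_def by auto
  hence "z = (h ^^ Suc k) y" by (simp only: fps)
  then show "z \<in> orbit h y" unfolding orbit_def by blast
qed

lemma orbit_step_eq:
  assumes b: "bij_betw h S S" and fin: "finite S" and y: "y \<in> S"
  shows "orbit h (h y) = orbit h y"
proof
  show "orbit h (h y) \<subseteq> orbit h y" by (rule orbit_step)
  have n: "0 < orbsize h y" "(h ^^ orbsize h y) y = y" using orb_facts[OF b fin y] by auto
  show "orbit h y \<subseteq> orbit h (h y)"
  proof
    fix z assume "z \<in> orbit h y"
    then obtain k where k: "z = (h ^^ k) y" unfolding orbit_def by auto
    have "z = (h ^^ (k + (orbsize h y - 1) * orbsize h y + (orbsize h y - 1))) (h y)"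
    proof -
      have "(h ^^ (k + (orbsize h y - 1) * orbsize h y + (orbsize h y - 1))) (h y)
          = (h ^^ (k + orbsize h y * orbsize h y)) y"
      proof -
        have "Suc (k + (orbsize h y - 1) * orbsize h y + (orbsize h y - 1)) = k + orbsize h y * orbsize h y"
          using n(1) by (cases "orbsize h y") auto
        then show ?thesis by (simp only: fps)
      qed
      also have "\<dots> = (h ^^ k) y"
        by (simp only: fpa funpow_period_mult[OF n(2)])
      finally show ?thesis using k by simp
    qed
    then show "z \<in> orbit h (h y)" unfolding orbit_def by blast
  qed
qed

lemma orbsize_step:
  assumes "bij_betw h S S" "finite S" "y \<in> S"
  shows "orbsize h (h y) = orbsize h y"
  unfolding orbsize_def using orbit_step_eq[OF assms] by simp


locale TQ =
  fixes Q0 :: "'v set" and Q1 :: "'a set" and s t :: "'a \<Rightarrow> 'v"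
    and f g :: "'a \<Rightarrow> 'a" and c :: "'a \<Rightarrow> 'k::field"
    and \<Omega>f \<Omega>g :: "'a set"
  assumes fin1: "finite Q1"
    and st: "\<forall>a\<in>Q1. s a \<in> Q0 \<and> t a \<in> Q0"
    and conn: "\<forall>u\<in>Q0. \<forall>v\<in>Q0. (u, v) \<in> ({(s a, t a) | a. a \<in> Q1} \<union> {(t a, s a) | a. a \<in> Q1})\<^sup>*"
    and noloop: "\<forall>a\<in>Q1. s a \<noteq> t a"
    and no2cyc: "\<forall>a\<in>Q1. \<forall>b\<in>Q1. \<not> (s a = t b \<and> t a = s b)"
    and out2: "\<forall>v\<in>Q0. card {a\<in>Q1. s a = v} = 2"
    and in2: "\<forall>v\<in>Q0. card {a\<in>Q1. t a = v} = 2"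
    and fbij: "bij_betw f Q1 Q1" and gbij: "bij_betw g Q1 Q1"
    and fg: "\<forall>\<alpha>\<in>Q1. {f \<alpha>, g \<alpha>} = {\<beta>\<in>Q1. s \<beta> = t \<alpha>}"
    and f3: "\<forall>\<alpha>\<in>Q1. f (f (f \<alpha>)) = \<alpha>"
    and cnz: "\<forall>\<alpha>\<in>Q1. c \<alpha> \<noteq> 0"
    and cconst: "\<forall>\<alpha>\<in>Q1. c (g \<alpha>) = c \<alpha>"
    and repf: "is_orbit_reps f Q1 \<Omega>f"
    and repg: "is_orbit_reps g Q1 \<Omega>g"
begin

lemma fQ[simp]: "a \<in> Q1 \<Longrightarrow> f a \<in> Q1" using fbij by (auto simp: bij_betw_def)
lemma gQ[simp]: "a \<in> Q1 \<Longrightarrow> g a \<in> Q1" using gbij by (auto simp: bij_betw_def)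
lemma sQ[simp]: "a \<in> Q1 \<Longrightarrow> s a \<in> Q0" using st by auto
lemma tQ[simp]: "a \<in> Q1 \<Longrightarrow> t a \<in> Q0" using st by auto

lemma sf[simp]: "a \<in> Q1 \<Longrightarrow> s (f a) = t a" using fg by blast
lemma sg[simp]: "a \<in> Q1 \<Longrightarrow> s (g a) = t a" using fg by blast
lemma fff[simp]: "a \<in> Q1 \<Longrightarrow> f (f (f a)) = a" using f3 by blast
lemma tff[simp]: "a \<in> Q1 \<Longrightarrow> t (f (f a)) = s a"
  by (metis fQ fff sf)

lemma fneg: assumes "a \<in> Q1" shows "f a \<noteq> g a"
proof
  assume "f a = g a"
  hence "{b\<in>Q1. s b = t a} = {f a}" using fg assms by (metis insert_absorb2)
  moreover have "card {b\<in>Q1. s b = t a} = 2" using out2 assms by simp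
  ultimately show False by simp
qed

lemma outset: "a \<in> Q1 \<Longrightarrow> {b\<in>Q1. s b = t a} = {f a, g a}" using fg by auto

lemma finj: "a \<in> Q1 \<Longrightarrow> b \<in> Q1 \<Longrightarrow> f a = f b \<Longrightarrow> a = b"
  using fbij by (auto simp: bij_betw_def inj_on_def)
lemma ginj: "a \<in> Q1 \<Longrightarrow> b \<in> Q1 \<Longrightarrow> g a = g b \<Longrightarrow> a = b"
  using gbij by (auto simp: bij_betw_def inj_on_def)

lemma swap:
  assumes a: "a \<in> Q1" and b: "b \<in> Q1" and tt: "t a = t b" and ne: "a \<noteq> b"
  shows "f a = g b"
proof -
  have "f a \<in> {f b, g b}" using outset[OF a] outset[OF b] tt a by auto
  moreover have "f a \<noteq> f b" using finj a b ne by blast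
  ultimately show ?thesis by auto
qed

lemma gpowQ[simp]: "a \<in> Q1 \<Longrightarrow> (g ^^ k) a \<in> Q1" by (induction k) auto
lemma fpowQ[simp]: "a \<in> Q1 \<Longrightarrow> (f ^^ k) a \<in> Q1" by (induction k) auto

abbreviation nn where "nn a \<equiv> orbsize g a"

lemma gn: "a \<in> Q1 \<Longrightarrow> (g ^^ nn a) a = a" using orb_facts[OF gbij fin1] by blast
lemma gmod: "a \<in> Q1 \<Longrightarrow> (g ^^ k) a = (g ^^ (k mod nn a)) a" using orb_facts(5)[OF gbij fin1] by blast
lemma ginjpow: "a \<in> Q1 \<Longrightarrow> inj_on (\<lambda>k. (g ^^ k) a) {0..<nn a}" using orb_facts[OF gbij fin1] by blast
lemma gorbit: "a \<in> Q1 \<Longrightarrow> orbit g a = (\<lambda>k. (g ^^ k) a) ` {0..<nn a}" using orb_facts[OF gbij fin1] by blast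

lemma n_step: "a \<in> Q1 \<Longrightarrow> nn (g a) = nn a" using orbsize_step[OF gbij fin1] by blast
lemma n_pow: "a \<in> Q1 \<Longrightarrow> nn ((g ^^ k) a) = nn a" by (induction k) (auto simp: n_step)
lemma c_pow: "a \<in> Q1 \<Longrightarrow> c ((g ^^ k) a) = c a" by (induction k) (auto simp: cconst)

lemma n_ge3: assumes a: "a \<in> Q1" shows "3 \<le> nn a"
proof -
  have p: "0 < nn a" using orb_facts[OF gbij fin1 a] by blast
  have "nn a \<noteq> 1"
  proof
    assume "nn a = 1" hence "g a = a" using gn[OF a] by simp
    hence "s a = t a" using sg[OF a] by simp
    thus False using noloop a by auto
  qed
  moreover have "nn a \<noteq> 2"
  proof
    assume "nn a = 2" hence "g (g a) = a" using gn[OF a] by (simp add: numeral_2_eq_2)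
    hence "s a = t (g a) \<and> t a = s (g a)" using sg[OF a] sg[OF gQ[OF a]] by simp
    thus False using no2cyc a gQ[OF a] by blast
  qed
  ultimately show ?thesis using p by linarith
qed

end

lemma endpt_Cons[simp]: "endpt t v (a # p) = endpt t (t a) p"
  by (simp add: endpt_def)
lemma endpt_Nil[simp]: "endpt t v [] = v"
  by (simp add: endpt_def)

lemma composable_append:
  "composable s t v (p @ q) = (composable s t v p \<and> composable s t (endpt t v p) q)"
  by (induction p arbitrary: v) auto

lemma endpt_append: "endpt t v (p @ q) = endpt t (endpt t v p) q"
  by (induction p arbitrary: v) auto

lemma sum_delta_nat:
  fixes F :: "nat \<Rightarrow> 'k::comm_monoid_add"
  assumes "\<And>k. k \<in> A \<Longrightarrow> k \<noteq> k0 \<Longrightarrow> F k = 0" "finite A"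
  shows "sum F A = (if k0 \<in> A then F k0 else 0)"
proof -
  have "sum F A = sum (\<lambda>k. if k = k0 then F k else 0) A"
    using assms(1) by (intro sum.cong) auto
  also have "\<dots> = (if k0 \<in> A then F k0 else 0)" using assms(2) by (simp add: sum.delta')
  finally show ?thesis .
qed

lemma pmul_mon_left:
  "pmul t (mon (v, p)) r (u, l) =
     (if u = v \<and> length p \<le> length l \<and> take (length p) l = p
      then r (endpt t v p, drop (length p) l) else (0::'k::field))"
proof -
  have "pmul t (mon (v, p)) r (u, l) = (\<Sum>k\<in>{0..length l}.
      (if (u, take k l) = (v, p) then 1 else 0) * r (endpt t u (take k l), drop k l))"
    by (simp add: pmul_def mon_def)
  also have "\<dots> = (if length p \<in> {0..length l} then
      (if (u, take (length p) l) = (v, p) then 1 else 0) * r (endpt t u (take (length p) l), drop (length p) l)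
      else 0)"
    by (rule sum_delta_nat) auto
  also have "\<dots> = (if u = v \<and> length p \<le> length l \<and> take (length p) l = p
      then r (endpt t v p, drop (length p) l) else 0)"
    by auto
  finally show ?thesis .
qed

lemma pmul_mon_right:
  "pmul t X (mon (w, q)) (u, l) =
     (if length q \<le> length l \<and> drop (length l - length q) l = q
         \<and> endpt t u (take (length l - length q) l) = w
      then X (u, take (length l - length q) l) else (0::'k::field))"
proof -
  have "pmul t X (mon (w, q)) (u, l) = (\<Sum>k\<in>{0..length l}.
      X (u, take k l) * (if (endpt t u (take k l), drop k l) = (w, q) then 1 else 0))"
    by (simp add: pmul_def mon_def)
  also have "\<dots> = (if length l - length q \<in> {0..length l} then
      X (u, take (length l - length q) l) * (if (endpt t u (take (length l - length q) l),
         drop (length l - length q) l) = (w, q) then 1 else 0) else 0)"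
    by (rule sum_delta_nat) auto
  also have "\<dots> = (if length q \<le> length l \<and> drop (length l - length q) l = q
         \<and> endpt t u (take (length l - length q) l) = w
      then X (u, take (length l - length q) l) else 0)"
    by auto
  finally show ?thesis .
qed

lemma pmul_scale_left: "pmul t (\<lambda>q. k * a q) b = (\<lambda>q. k * pmul t a b q)"
  by (rule ext) (simp add: pmul_def sum_distrib_left mult.assoc)

lemma ideal_scale:
  assumes "x \<in> gen_ideal Q0 Q1 s t R"
  shows "(\<lambda>q. k * x q) \<in> gen_ideal Q0 Q1 s t R"
  using assms
proof induction
  case zero then show ?case by (simp add: gen_ideal.zero)
next
  case (gen r a b)
  have "(\<lambda>q. k * a q) \<in> compl_alg Q0 Q1 s t" using gen(2) by (simp add: compl_alg_def)
  hence "pmul t (pmul t (\<lambda>q. k * a q) r) b \<in> gen_ideal Q0 Q1 s t R"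
    using gen by (intro gen_ideal.gen) auto
  moreover have "pmul t (pmul t (\<lambda>q. k * a q) r) b = (\<lambda>q. k * pmul t (pmul t a r) b q)"
    by (simp add: pmul_scale_left)
  ultimately show ?case by simp
next
  case (add x y)
  have "(\<lambda>q. (\<lambda>q. k * x q) q + (\<lambda>q. k * y q) q) \<in> gen_ideal Q0 Q1 s t R"
    using add by (intro gen_ideal.add)
  moreover have "(\<lambda>q. (\<lambda>q. k * x q) q + (\<lambda>q. k * y q) q) = (\<lambda>q. k * (x q + y q))"
    by (simp add: algebra_simps)
  ultimately show ?case by simp
qed

lemma mon_compl: "valid_path Q0 Q1 s t P \<Longrightarrow> mon P \<in> compl_alg Q0 Q1 s t"
  by (auto simp: compl_alg_def mon_def)


context TQ begin

definition tri where "tri a = [a, f a, f (f a)]"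
definition Fl where "Fl a = [f a, f (f a)]"
definition gp where "gp a m = map (\<lambda>k. (g ^^ k) a) [0..<m]"
definition Bl where "Bl a = gp (g a) (nn a - 1)"
definition Z1 where "Z1 a = [a, f a, g (f a)]"

lemma gp_Suc: "gp a (Suc m) = a # gp (g a) m"
  unfolding gp_def by (simp add: upt_conv_Cons map_Suc_upt[symmetric] fps del: upt_Suc)

lemma gp_snoc: "gp a (Suc m) = gp a m @ [(g ^^ m) a]"
  unfolding gp_def by simp

lemma gp_len[simp]: "length (gp a m) = m" unfolding gp_def by simp

lemma gp_valid: "a \<in> Q1 \<Longrightarrow> composable s t (s a) (gp a m) \<and> endpt t (s a) (gp a m) = s ((g ^^ m) a)
   \<and> set (gp a m) \<subseteq> Q1"
proof (induction m arbitrary: a)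
  case 0 then show ?case by (simp add: gp_def)
next
  case (Suc m)
  have ih: "composable s t (s (g a)) (gp (g a) m) \<and> endpt t (s (g a)) (gp (g a) m) = s ((g ^^ m) (g a))
   \<and> set (gp (g a) m) \<subseteq> Q1" using Suc.IH[of "g a"] Suc.prems by simp
  have e: "(g ^^ m) (g a) = (g ^^ Suc m) a" by (rule fps)
  have st: "s (g a) = t a" using Suc.prems by simp
  show ?case using ih Suc.prems unfolding gp_Suc e st by simp
qed

lemma nn_pos: "a \<in> Q1 \<Longrightarrow> 0 < nn a" using n_ge3 by fastforce

lemma gcycle_gp: "gcycle g a = gp a (nn a)" unfolding gcycle_def gp_def by simp

lemma gcycle_Bl: assumes "a \<in> Q1" shows "gcycle g a = a # Bl a"
proof -
  have "nn a = Suc (nn a - 1)" using nn_pos[OF assms] by simp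
  then show ?thesis unfolding gcycle_gp Bl_def by (metis gp_Suc)
qed

lemma Bl_len[simp]: "length (Bl a) = nn a - 1" unfolding Bl_def by simp

lemma Bl_valid: assumes a: "a \<in> Q1"
  shows "composable s t (t a) (Bl a) \<and> endpt t (t a) (Bl a) = s a \<and> set (Bl a) \<subseteq> Q1"
proof -
  have n: "Suc (nn a - 1) = nn a" using nn_pos[OF a] by simp
  have "(g ^^ (nn a - 1)) (g a) = a" using gn[OF a] n by (metis fps)
  then show ?thesis using gp_valid[of "g a" "nn a - 1"] a unfolding Bl_def by simp
qed

lemma Bl_hd: assumes a: "a \<in> Q1" shows "Bl a = g a # gp (g (g a)) (nn a - 2)"
proof -
  have "nn a - 1 = Suc (nn a - 2)" using n_ge3[OF a] by simp
  then show ?thesis unfolding Bl_def by (simp add: gp_Suc)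
qed

lemma rot1_gc: assumes a: "a \<in> Q1" shows "rotate1 (gcycle g a) = gcycle g (g a)"
proof -
  have n: "Suc (nn a - 1) = nn a" using nn_pos[OF a] by simp
  have e: "(g ^^ (nn a - 1)) (g a) = a" using gn[OF a] n by (metis fps)
  have "gcycle g (g a) = gp (g a) (Suc (nn a - 1))" unfolding gcycle_gp n_step[OF a] n ..
  also have "\<dots> = Bl a @ [a]" unfolding gp_snoc Bl_def e ..
  finally show ?thesis using gcycle_Bl[OF a] by simp
qed

lemma rot_gc: "a \<in> Q1 \<Longrightarrow> rotate k (gcycle g a) = gcycle g ((g ^^ k) a)"
  by (induction k) (auto simp: rot1_gc)

lemma rot1_tri: "a \<in> Q1 \<Longrightarrow> rotate1 (tri a) = tri (f a)"
  by (simp add: tri_def)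

lemma rot_tri: "a \<in> Q1 \<Longrightarrow> rotate k (tri a) = tri ((f ^^ k) a)"
  by (induction k) (auto simp: rot1_tri)

lemma gcycle_ne_tri: assumes a: "a \<in> Q1" and b: "b \<in> Q1" shows "gcycle g a \<noteq> tri b"
proof
  assume e: "gcycle g a = tri b"
  have "gcycle g a = a # g a # gp (g (g a)) (nn a - 2)" using gcycle_Bl[OF a] Bl_hd[OF a] by simp
  hence "a = b \<and> g a = f b" using e by (auto simp: tri_def)
  thus False using fneg[OF a] by metis
qed

lemma gcycle_hd: "a \<in> Q1 \<Longrightarrow> hd (gcycle g a) = a" by (simp add: gcycle_Bl)

lemma rot_inv: "\<exists>k. l = rotate k (rotate j l)"
proof (cases "l = []")
  case True then show ?thesis by simp
next
  case False
  define L where "L = length l"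
  define r where "r = j mod L"
  define d where "d = j div L"
  have jd: "j = d * L + r" unfolding r_def d_def by simp
  have rl: "r < L" using False unfolding r_def L_def by simp
  have e: "(L - r) + j = L * (Suc d)" using jd rl by (simp add: algebra_simps)
  have "rotate (L - r) (rotate j l) = rotate ((L - r) + j) l" by (simp add: rotate_rotate)
  also have "\<dots> = rotate (((L - r) + j) mod length l) l" by (rule rotate_conv_mod)
  also have "((L - r) + j) mod length l = 0"
  proof -
    have "((L - r) + j) mod L = 0" unfolding e by simp
    thus ?thesis by (simp add: L_def)
  qed
  finally have "rotate (L - r) (rotate j l) = l" by simp
  then show ?thesis by metis
qed

lemma Of_sub: "\<Omega>f \<subseteq> Q1" using repf by (simp add: is_orbit_reps_def)
lemma Og_sub: "\<Omega>g \<subseteq> Q1" using repg by (simp add: is_orbit_reps_def)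

abbreviation W where "W \<equiv> potential s f g c \<Omega>f \<Omega>g"

lemma W_eval: "W (v, l) = (\<Sum>\<omega>\<in>\<Omega>f. if (v, l) = (s \<omega>, tri \<omega>) then 1 else 0)
   - (\<Sum>\<omega>\<in>\<Omega>g. if (v, l) = (s \<omega>, gcycle g \<omega>) then c \<omega> else 0)"
  unfolding potential_def mon_def tri_def by (auto intro!: sum.cong)

end

context TQ begin

lemma fin_Of: "finite \<Omega>f" using Of_sub fin1 finite_subset by blast
lemma fin_Og: "finite \<Omega>g" using Og_sub fin1 finite_subset by blast

lemma tri_inj: "tri a = tri b \<Longrightarrow> a = b" by (simp add: tri_def)
lemma gc_inj: "a \<in> Q1 \<Longrightarrow> b \<in> Q1 \<Longrightarrow> gcycle g a = gcycle g b \<Longrightarrow> a = b"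
  by (metis gcycle_hd)

lemma W_zero: assumes "\<forall>y\<in>Q1. l \<noteq> tri y \<and> l \<noteq> gcycle g y" shows "W (v, l) = 0"
proof -
  have "(\<Sum>\<omega>\<in>\<Omega>f. if (v, l) = (s \<omega>, tri \<omega>) then 1 else (0::'k)) = 0"
    using assms Of_sub by (intro sum.neutral) auto
  moreover have "(\<Sum>\<omega>\<in>\<Omega>g. if (v, l) = (s \<omega>, gcycle g \<omega>) then c \<omega> else 0) = 0"
    using assms Og_sub by (intro sum.neutral) auto
  ultimately show ?thesis by (simp add: W_eval)
qed

lemma W_tri: assumes y: "y \<in> Q1" shows "W (s y, tri y) = (if y \<in> \<Omega>f then 1 else 0)"
proof -
  have "(\<Sum>\<omega>\<in>\<Omega>f. if (s y, tri y) = (s \<omega>, tri \<omega>) then 1 else (0::'k))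
      = (\<Sum>\<omega>\<in>\<Omega>f. if \<omega> = y then 1 else 0)"
    by (intro sum.cong) (auto dest: tri_inj)
  also have "\<dots> = (if y \<in> \<Omega>f then 1 else 0)" using fin_Of by (simp add: sum.delta')
  finally have 1: "(\<Sum>\<omega>\<in>\<Omega>f. if (s y, tri y) = (s \<omega>, tri \<omega>) then 1 else (0::'k))
      = (if y \<in> \<Omega>f then 1 else 0)" .
  have 2: "(\<Sum>\<omega>\<in>\<Omega>g. if (s y, tri y) = (s \<omega>, gcycle g \<omega>) then c \<omega> else 0) = 0"
    using Og_sub y gcycle_ne_tri by (intro sum.neutral) (metis (no_types, lifting) Pair_inject subsetD)
  show ?thesis using 1 2 by (simp add: W_eval)
qed

lemma W_gc: assumes y: "y \<in> Q1" shows "W (s y, gcycle g y) = - (if y \<in> \<Omega>g then c y else 0)"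
proof -
  have "(\<Sum>\<omega>\<in>\<Omega>g. if (s y, gcycle g y) = (s \<omega>, gcycle g \<omega>) then c \<omega> else 0)
      = (\<Sum>\<omega>\<in>\<Omega>g. if \<omega> = y then c \<omega> else 0)"
    using Og_sub y by (intro sum.cong) (auto dest: gc_inj)
  also have "\<dots> = (if y \<in> \<Omega>g then c y else 0)" using fin_Og by (simp add: sum.delta')
  finally have 2: "(\<Sum>\<omega>\<in>\<Omega>g. if (s y, gcycle g y) = (s \<omega>, gcycle g \<omega>) then c \<omega> else 0)
      = (if y \<in> \<Omega>g then c y else 0)" .
  have 1: "(\<Sum>\<omega>\<in>\<Omega>f. if (s y, gcycle g y) = (s \<omega>, tri \<omega>) then 1 else (0::'k)) = 0"
    using Of_sub y gcycle_ne_tri by (intro sum.neutral) (metis (no_types, lifting) Pair_inject subsetD)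
  show ?thesis using 1 2 by (simp add: W_eval)
qed

lemma f_distinct: assumes a: "a \<in> Q1" shows "f a \<noteq> a" "f (f a) \<noteq> a" "f (f a) \<noteq> f a"
proof -
  show "f a \<noteq> a" using noloop a sf[OF a] by metis
  show "f (f a) \<noteq> a" using noloop a tff[OF a] by metis
  show "f (f a) \<noteq> f a" using noloop fQ[OF a] sf[OF fQ[OF a]] by metis
qed

lemma f_orbit: assumes a: "a \<in> Q1" shows "orbit f a = {a, f a, f (f a)}"
proof
  have p: "(f ^^ 3) a = a" using a by (simp add: numeral_3_eq_3)
  show "orbit f a \<subseteq> {a, f a, f (f a)}"
  proof
    fix z assume "z \<in> orbit f a"
    then obtain k where "z = (f ^^ k) a" unfolding orbit_def by auto
    hence "z = (f ^^ (k mod 3)) a" using funpow_mod_period[OF p] by simp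
    moreover have "k mod 3 = 0 \<or> k mod 3 = 1 \<or> k mod 3 = 2" by auto
    ultimately show "z \<in> {a, f a, f (f a)}" by (auto simp: numeral_2_eq_2)
  qed
  have "a = (f ^^ 0) a" "f a = (f ^^ 1) a" "f (f a) = (f ^^ 2) a" by (simp_all add: numeral_2_eq_2)
  then show "{a, f a, f (f a)} \<subseteq> orbit f a" unfolding orbit_def by (metis empty_subsetI insert_subset rangeI)
qed

lemma f_sum: assumes a: "a \<in> Q1"
  shows "(\<Sum>j<3. if (f ^^ j) a \<in> \<Omega>f then 1 else (0::'k)) = 1"
proof -
  have "\<exists>!\<omega>. \<omega> \<in> \<Omega>f \<and> \<omega> \<in> orbit f a" using repf a by (simp add: is_orbit_reps_def)
  hence ex1: "\<exists>!\<omega>. \<omega> \<in> \<Omega>f \<and> \<omega> \<in> {a, f a, f (f a)}" unfolding f_orbit[OF a] .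
  then obtain \<omega> where w: "\<omega> \<in> \<Omega>f" "\<omega> \<in> {a, f a, f (f a)}" by auto
  have u: "\<And>x. x \<in> \<Omega>f \<Longrightarrow> x \<in> {a, f a, f (f a)} \<Longrightarrow> x = \<omega>" using ex1 w by auto
  have d: "f a \<noteq> a" "f (f a) \<noteq> a" "f (f a) \<noteq> f a" using f_distinct[OF a] by auto
  have "(\<Sum>j<3. if (f ^^ j) a \<in> \<Omega>f then 1 else (0::'k)) =
     (if a \<in> \<Omega>f then 1 else 0) + (if f a \<in> \<Omega>f then 1 else 0) + (if f (f a) \<in> \<Omega>f then 1 else 0)"
    by (simp add: numeral_3_eq_3)
  also have "\<dots> = 1"
  proof -
    have i1: "a \<in> \<Omega>f \<Longrightarrow> a = \<omega>" using u by simp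
    have i2: "f a \<in> \<Omega>f \<Longrightarrow> f a = \<omega>" using u by simp
    have i3: "f (f a) \<in> \<Omega>f \<Longrightarrow> f (f a) = \<omega>" using u by simp
    from w(2) consider "\<omega> = a" | "\<omega> = f a" | "\<omega> = f (f a)" by blast
    then show ?thesis
    proof cases
      case 1
      hence "f a \<notin> \<Omega>f" "f (f a) \<notin> \<Omega>f" using i2 i3 d by metis+
      then show ?thesis using w(1) 1 by simp
    next
      case 2
      hence "a \<notin> \<Omega>f" "f (f a) \<notin> \<Omega>f" using i1 i3 d by metis+
      then show ?thesis using w(1) 2 by simp
    next
      case 3
      hence "a \<notin> \<Omega>f" "f a \<notin> \<Omega>f" using i1 i2 d by metis+
      then show ?thesis using w(1) 3 by simp
    qed
  qed
  finally show ?thesis .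
qed

lemma g_sum: assumes a: "a \<in> Q1"
  shows "(\<Sum>j<nn a. if (g ^^ j) a \<in> \<Omega>g then c ((g ^^ j) a) else 0) = c a"
proof -
  have ex1: "\<exists>!\<omega>. \<omega> \<in> \<Omega>g \<and> \<omega> \<in> orbit g a" using repg a by (simp add: is_orbit_reps_def)
  then obtain \<omega> where w: "\<omega> \<in> \<Omega>g" "\<omega> \<in> orbit g a" by auto
  have u: "\<And>x. x \<in> \<Omega>g \<Longrightarrow> x \<in> orbit g a \<Longrightarrow> x = \<omega>" using ex1 w by auto
  obtain j0 where j0: "j0 < nn a" "\<omega> = (g ^^ j0) a" using w(2) gorbit[OF a] by auto
  have oth: "\<And>j. j \<in> {..<nn a} \<Longrightarrow> j \<noteq> j0 \<Longrightarrow> (if (g ^^ j) a \<in> \<Omega>g then c ((g ^^ j) a) else 0) = 0"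
  proof -
    fix j assume j: "j \<in> {..<nn a}" "j \<noteq> j0"
    have "(g ^^ j) a \<notin> \<Omega>g"
    proof
      assume "(g ^^ j) a \<in> \<Omega>g"
      moreover have "(g ^^ j) a \<in> orbit g a" using j gorbit[OF a] by auto
      ultimately have "(g ^^ j) a = (g ^^ j0) a" using u j0 by auto
      thus False using inj_onD[OF ginjpow[OF a]] j j0 by auto
    qed
    thus "(if (g ^^ j) a \<in> \<Omega>g then c ((g ^^ j) a) else 0) = 0" by simp
  qed
  have "(\<Sum>j<nn a. if (g ^^ j) a \<in> \<Omega>g then c ((g ^^ j) a) else 0) =
     (if j0 \<in> {..<nn a} then (if (g ^^ j0) a \<in> \<Omega>g then c ((g ^^ j0) a) else 0) else 0)"
    by (rule sum_delta_nat[OF oth]) auto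
  also have "\<dots> = c a" using j0 w c_pow[OF a] by auto
  finally show ?thesis .
qed

end

context TQ begin

lemma cder_unf: "cder Q0 Q1 s t \<beta> W (z, m) = (if z = t \<beta> \<and> valid_path Q0 Q1 s t (s \<beta>, \<beta> # m)
     \<and> endpt t (s \<beta>) (\<beta> # m) = s \<beta>
     then (\<Sum>j<Suc (length m). W (s (hd (rotate j (\<beta> # m))), rotate j (\<beta> # m))) else 0)"
  by (simp add: cder_def)

lemma Fl_ne_Bl: "\<beta> \<in> Q1 \<Longrightarrow> Fl \<beta> \<noteq> Bl \<beta>"
  using fneg by (simp add: Fl_def Bl_hd)

lemma tri_Fl: "\<beta> # Fl \<beta> = tri \<beta>" by (simp add: Fl_def tri_def)

lemma tri_hd: "hd (tri a) = a" by (simp add: tri_def)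

lemma valid_tri: "\<beta> \<in> Q1 \<Longrightarrow> valid_path Q0 Q1 s t (s \<beta>, tri \<beta>) \<and> endpt t (s \<beta>) (tri \<beta>) = s \<beta>"
  by (simp add: valid_path_def tri_def)

lemma valid_gc: "\<beta> \<in> Q1 \<Longrightarrow> valid_path Q0 Q1 s t (s \<beta>, gcycle g \<beta>) \<and> endpt t (s \<beta>) (gcycle g \<beta>) = s \<beta>"
  using gp_valid[of \<beta> "nn \<beta>"] gn[of \<beta>] by (simp add: valid_path_def gcycle_gp)

lemma cder_char:
  assumes b: "\<beta> \<in> Q1"
  shows "cder Q0 Q1 s t \<beta> W (z, m) =
     (if z = t \<beta> \<and> m = Fl \<beta> then 1 else 0) - (if z = t \<beta> \<and> m = Bl \<beta> then c \<beta> else 0)"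
proof (cases "z = t \<beta> \<and> m = Fl \<beta>")
  case True
  hence m: "\<beta> # m = tri \<beta>" and z: "z = t \<beta>" by (auto simp: tri_Fl)
  have "(\<Sum>j<Suc (length m). W (s (hd (rotate j (\<beta> # m))), rotate j (\<beta> # m)))
      = (\<Sum>j<3. if (f ^^ j) \<beta> \<in> \<Omega>f then 1 else 0)"
  proof -
    have l: "Suc (length m) = 3" using True by (simp add: Fl_def)
    show ?thesis unfolding l m using b by (intro sum.cong) (auto simp: rot_tri tri_hd W_tri)
  qed
  also have "\<dots> = 1" by (rule f_sum[OF b])
  finally have sm: "(\<Sum>j<Suc (length m). W (s (hd (rotate j (\<beta> # m))), rotate j (\<beta> # m))) = 1" .
  have cnd: "z = t \<beta> \<and> valid_path Q0 Q1 s t (s \<beta>, \<beta> # m) \<and> endpt t (s \<beta>) (\<beta> # m) = s \<beta>"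
    using z valid_tri[OF b] unfolding m by simp
  have "cder Q0 Q1 s t \<beta> W (z, m) = 1" unfolding cder_unf if_P[OF cnd] sm ..
  then show ?thesis using True Fl_ne_Bl[OF b] by simp
next
  case nF: False
  show ?thesis
  proof (cases "z = t \<beta> \<and> m = Bl \<beta>")
    case True
    hence m: "\<beta> # m = gcycle g \<beta>" and z: "z = t \<beta>" by (auto simp: gcycle_Bl[OF b])
    have "(\<Sum>j<Suc (length m). W (s (hd (rotate j (\<beta> # m))), rotate j (\<beta> # m)))
        = (\<Sum>j<nn \<beta>. - (if (g ^^ j) \<beta> \<in> \<Omega>g then c ((g ^^ j) \<beta>) else 0))"
    proof -
      have l: "Suc (length m) = nn \<beta>" using True n_ge3[OF b] by simp
      show ?thesis unfolding l m using b by (intro sum.cong) (auto simp: rot_gc gcycle_hd W_gc)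
    qed
    also have "\<dots> = - c \<beta>" using g_sum[OF b] by (simp add: sum_negf)
    finally have sm: "(\<Sum>j<Suc (length m). W (s (hd (rotate j (\<beta> # m))), rotate j (\<beta> # m))) = - c \<beta>" .
    have cnd: "z = t \<beta> \<and> valid_path Q0 Q1 s t (s \<beta>, \<beta> # m) \<and> endpt t (s \<beta>) (\<beta> # m) = s \<beta>"
      using z valid_gc[OF b] unfolding m by simp
    have "cder Q0 Q1 s t \<beta> W (z, m) = - c \<beta>" unfolding cder_unf if_P[OF cnd] sm ..
    then show ?thesis using True nF by simp
  next
    case nB: False
    show ?thesis
    proof (cases "z = t \<beta> \<and> valid_path Q0 Q1 s t (s \<beta>, \<beta> # m) \<and> endpt t (s \<beta>) (\<beta> # m) = s \<beta>")
      case False then show ?thesis using nF nB by (auto simp: cder_unf)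
    next
      case True
      hence mF: "m \<noteq> Fl \<beta>" and mB: "m \<noteq> Bl \<beta>" using nF nB by auto
      have "\<And>j. W (s (hd (rotate j (\<beta> # m))), rotate j (\<beta> # m)) = 0"
      proof -
        fix j
        show "W (s (hd (rotate j (\<beta> # m))), rotate j (\<beta> # m)) = 0"
        proof (rule W_zero, intro ballI conjI notI)
          fix y assume y: "y \<in> Q1" and e: "rotate j (\<beta> # m) = tri y"
          obtain k where "\<beta> # m = rotate k (rotate j (\<beta> # m))" using rot_inv by blast
          hence e2: "\<beta> # m = tri ((f ^^ k) y)" using e rot_tri[OF y] by simp
          hence "(f ^^ k) y = \<beta>" by (simp add: tri_def)
          hence "\<beta> # m = tri \<beta>" using e2 by simp
          thus False using mF by (simp add: tri_def Fl_def)
        next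
          fix y assume y: "y \<in> Q1" and e: "rotate j (\<beta> # m) = gcycle g y"
          obtain k where "\<beta> # m = rotate k (rotate j (\<beta> # m))" using rot_inv by blast
          hence e2: "\<beta> # m = gcycle g ((g ^^ k) y)" using e rot_gc[OF y] by simp
          hence "(g ^^ k) y = \<beta>" using gcycle_hd[of "(g ^^ k) y"] y by (metis gpowQ list.sel(1))
          hence "\<beta> # m = gcycle g \<beta>" using e2 by simp
          thus False using mB gcycle_Bl[OF b] by simp
        qed
      qed
      hence "cder Q0 Q1 s t \<beta> W (z, m) = 0" unfolding cder_unf by simp
      then show ?thesis using nF nB by auto
    qed
  qed
qed

end

context TQ begin

lemma endpt_Q0: "valid_path Q0 Q1 s t (v, p) \<Longrightarrow> endpt t v p \<in> Q0"
proof (cases "p = []")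
  case False
  assume "valid_path Q0 Q1 s t (v, p)"
  hence "last p \<in> Q1" using False by (auto simp: valid_path_def)
  thus ?thesis using False by (simp add: endpt_def)
qed (simp add: valid_path_def)

lemma valid_append: "valid_path Q0 Q1 s t (v, p @ q) =
   (valid_path Q0 Q1 s t (v, p) \<and> valid_path Q0 Q1 s t (endpt t v p, q))"
  using endpt_Q0[of v p] by (auto simp: valid_path_def composable_append)

abbreviation II where "II \<equiv> gen_ideal Q0 Q1 s t {cder Q0 Q1 s t \<alpha> W | \<alpha>. \<alpha> \<in> Q1}"

definition Rel where "Rel P k P' \<longleftrightarrow> (\<lambda>q. mon P q - k * mon P' q) \<in> II"

lemma Fl_valid: "\<beta> \<in> Q1 \<Longrightarrow> composable s t (t \<beta>) (Fl \<beta>) \<and> endpt t (t \<beta>) (Fl \<beta>) = s \<beta> \<and> set (Fl \<beta>) \<subseteq> Q1"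
  by (simp add: Fl_def)

lemma prod_eq:
  assumes b: "\<beta> \<in> Q1" and ep: "endpt t v p = t \<beta>"
  shows "pmul t (pmul t (mon (v, p)) (cder Q0 Q1 s t \<beta> W)) (mon (s \<beta>, q)) (u, l)
    = (if u = v \<and> l = p @ Fl \<beta> @ q then 1 else 0) - (if u = v \<and> l = p @ Bl \<beta> @ q then c \<beta> else 0)"
proof -
  have FB: "Fl \<beta> \<noteq> Bl \<beta>" by (rule Fl_ne_Bl[OF b])
  have eF: "endpt t v (p @ Fl \<beta>) = s \<beta>" using ep Fl_valid[OF b] by (simp add: endpt_append)
  have eB: "endpt t v (p @ Bl \<beta>) = s \<beta>" using ep Bl_valid[OF b] by (simp add: endpt_append)
  define l' where "l' = take (length l - length q) l"
  have L: "pmul t (pmul t (mon (v, p)) (cder Q0 Q1 s t \<beta> W)) (mon (s \<beta>, q)) (u, l) =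
    (if length q \<le> length l \<and> drop (length l - length q) l = q \<and> endpt t u l' = s \<beta>
     then (if u = v \<and> length p \<le> length l' \<and> take (length p) l' = p
      then cder Q0 Q1 s t \<beta> W (endpt t v p, drop (length p) l') else 0) else 0)"
    unfolding pmul_mon_right pmul_mon_left l'_def ..
  show ?thesis
  proof (cases "u = v \<and> l = p @ Fl \<beta> @ q")
    case True
    hence l': "l' = p @ Fl \<beta>" unfolding l'_def by simp
    show ?thesis using True FB eF unfolding L l' ep cder_char[OF b] by simp
  next
    case nF: False
    show ?thesis
    proof (cases "u = v \<and> l = p @ Bl \<beta> @ q")
      case True
      hence l': "l' = p @ Bl \<beta>" unfolding l'_def by simp
      show ?thesis using True FB eB unfolding L l' ep cder_char[OF b] by simp
    next
      case nB: False
      have "pmul t (pmul t (mon (v, p)) (cder Q0 Q1 s t \<beta> W)) (mon (s \<beta>, q)) (u, l) = 0"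
      proof (cases "length q \<le> length l \<and> drop (length l - length q) l = q \<and> u = v
          \<and> length p \<le> length l' \<and> take (length p) l' = p")
        case True
        have l1: "l = l' @ q" using True unfolding l'_def by (metis append_take_drop_id)
        have l2: "l' = p @ drop (length p) l'" using True by (metis append_take_drop_id)
        have "drop (length p) l' \<noteq> Fl \<beta>" "drop (length p) l' \<noteq> Bl \<beta>"
          using nF nB True l1 l2 by (metis append.assoc)+
        then show ?thesis unfolding L ep cder_char[OF b] by simp
      next
        case False
        then show ?thesis unfolding L by auto
      qed
      then show ?thesis using nF nB by auto
    qed
  qed
qed

lemma basic_rw:
  assumes b: "\<beta> \<in> Q1" and v: "valid_path Q0 Q1 s t (v, p @ Fl \<beta> @ q)"
  shows "Rel (v, p @ Fl \<beta> @ q) (c \<beta>) (v, p @ Bl \<beta> @ q)"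
proof -
  have vp: "valid_path Q0 Q1 s t (v, p)" and vr: "valid_path Q0 Q1 s t (endpt t v p, Fl \<beta> @ q)"
    using v valid_append by auto
  have ep: "endpt t v p = t \<beta>" using vr b by (simp add: valid_path_def Fl_def)
  have vq: "valid_path Q0 Q1 s t (s \<beta>, q)"
    using vr valid_append[of "endpt t v p" "Fl \<beta>" q] Fl_valid[OF b] ep by simp
  have "pmul t (pmul t (mon (v, p)) (cder Q0 Q1 s t \<beta> W)) (mon (s \<beta>, q)) \<in> II"
    using b by (intro gen_ideal.gen mon_compl vp vq) auto
  moreover have "pmul t (pmul t (mon (v, p)) (cder Q0 Q1 s t \<beta> W)) (mon (s \<beta>, q))
     = (\<lambda>P. mon (v, p @ Fl \<beta> @ q) P - c \<beta> * mon (v, p @ Bl \<beta> @ q) P)"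
  proof
    fix P :: "'v \<times> 'a list"
    obtain u l where P: "P = (u, l)" by force
    show "pmul t (pmul t (mon (v, p)) (cder Q0 Q1 s t \<beta> W)) (mon (s \<beta>, q)) P
       = mon (v, p @ Fl \<beta> @ q) P - c \<beta> * mon (v, p @ Bl \<beta> @ q) P"
      unfolding P prod_eq[OF b ep] by (simp add: mon_def)
  qed
  ultimately show ?thesis unfolding Rel_def by simp
qed

end

context TQ begin

lemma rel_refl: "Rel P 1 P"
proof -
  have "(\<lambda>q. mon P q - 1 * mon P q) = (\<lambda>_. 0)" by simp
  thus ?thesis unfolding Rel_def by (simp add: gen_ideal.zero)
qed

lemma rel_trans: assumes "Rel P k P'" "Rel P' k' P''" shows "Rel P (k * k') P''"
proof -
  have a: "(\<lambda>q. mon P q - k * mon P' q) \<in> II" using assms(1) unfolding Rel_def .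
  have b: "(\<lambda>q. k * (mon P' q - k' * mon P'' q)) \<in> II"
    using ideal_scale[OF assms(2)[unfolded Rel_def]] .
  have "(\<lambda>q. (\<lambda>q. mon P q - k * mon P' q) q + (\<lambda>q. k * (mon P' q - k' * mon P'' q)) q) \<in> II"
    by (rule gen_ideal.add[OF a b])
  moreover have "(\<lambda>q. (\<lambda>q. mon P q - k * mon P' q) q + (\<lambda>q. k * (mon P' q - k' * mon P'' q)) q)
     = (\<lambda>q. mon P q - (k * k') * mon P'' q)" by (simp add: algebra_simps)
  ultimately show ?thesis unfolding Rel_def by simp
qed

lemma rel_sym: assumes "Rel P k P'" "k \<noteq> 0" shows "Rel P' (1 / k) P"
proof -
  have "(\<lambda>q. (- 1 / k) * (mon P q - k * mon P' q)) \<in> II"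
    using ideal_scale[OF assms(1)[unfolded Rel_def]] .
  moreover have "(\<lambda>q. (- 1 / k) * (mon P q - k * mon P' q)) = (\<lambda>q. mon P' q - (1 / k) * mon P q)"
  proof
    fix q show "(- 1 / k) * (mon P q - k * mon P' q) = mon P' q - (1 / k) * mon P q"
      using assms(2) by (simp add: field_simps)
  qed
  ultimately show ?thesis unfolding Rel_def by simp
qed

definition van where "van P \<longleftrightarrow> (\<forall>N. \<exists>k P'. Rel P k P' \<and> N \<le> length (snd P'))"

lemma van_rel: "Rel P k P' \<Longrightarrow> van P' \<Longrightarrow> van P"
  unfolding van_def by (meson rel_trans)

lemma van_closure: assumes "van P" shows "mon P \<in> madic_closure II"
  unfolding madic_closure_def
proof (intro CollectI allI)
  fix N
  obtain k P' where r: "Rel P k P'" and l: "N \<le> length (snd P')" using assms unfolding van_def by blast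
  show "\<exists>y\<in>II. \<forall>q. length (snd q) < N \<longrightarrow> mon P q = y q"
  proof (intro bexI allI impI)
    show "(\<lambda>q. mon P q - k * mon P' q) \<in> II" using r unfolding Rel_def .
    fix q :: "'v \<times> 'a list" assume "length (snd q) < N"
    hence "q \<noteq> P'" using l by auto
    thus "mon P q = mon P q - k * mon P' q" by (simp add: mon_def)
  qed
qed

lemma van_self: assumes r: "Rel P k P" and k: "k \<noteq> 1" shows "van P"
proof -
  have "(\<lambda>q. (1 / (1 - k)) * (mon P q - k * mon P q)) \<in> II"
    using ideal_scale[OF r[unfolded Rel_def]] .
  moreover have "(\<lambda>q. (1 / (1 - k)) * (mon P q - k * mon P q)) = mon P"
  proof
    fix q
    have "1 - k \<noteq> 0" using k by simp
    thus "(1 / (1 - k)) * (mon P q - k * mon P q) = mon P q" by (simp add: field_simps)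
  qed
  ultimately have m: "mon P \<in> II" by simp
  show ?thesis unfolding van_def
  proof
    fix N
    have "Rel P 0 (fst P, replicate N undefined)" unfolding Rel_def using m by simp
    thus "\<exists>k P'. Rel P k P' \<and> N \<le> length (snd P')" by force
  qed
qed

lemma valid_rw: assumes b: "\<beta> \<in> Q1" and v: "valid_path Q0 Q1 s t (v, p @ Fl \<beta> @ q)"
  shows "valid_path Q0 Q1 s t (v, p @ Bl \<beta> @ q)"
proof -
  have vp: "valid_path Q0 Q1 s t (v, p)" and vr: "valid_path Q0 Q1 s t (endpt t v p, Fl \<beta> @ q)"
    using v valid_append by auto
  have ep: "endpt t v p = t \<beta>" using vr b by (simp add: valid_path_def Fl_def)
  have vq: "valid_path Q0 Q1 s t (s \<beta>, q)"
    using vr valid_append[of "endpt t v p" "Fl \<beta>" q] Fl_valid[OF b] ep by simp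
  have vB: "valid_path Q0 Q1 s t (t \<beta>, Bl \<beta>)" using Bl_valid[OF b] b by (simp add: valid_path_def)
  show ?thesis using vp vq vB ep Bl_valid[OF b] by (simp add: valid_append endpt_append)
qed

lemma swap_gen:
  assumes "a \<in> Q1" "b \<in> Q1" "t a = t b" "f a \<noteq> g b" shows "a = b"
  using swap assms by blast

lemma chain:
  assumes x: "x \<in> Q1" and v: "valid_path Q0 Q1 s t (v, u @ Z1 x @ w)"
  defines "\<gamma> \<equiv> f (f x)"
  defines "\<eta> \<equiv> (g ^^ (nn \<gamma> - 3)) (g \<gamma>)"
  defines "\<epsilon> \<equiv> f (f (g \<eta>))"
  shows "Rel (v, u @ Z1 x @ w) (c \<gamma> * c \<epsilon>)
            (v, u @ gp (g \<gamma>) (nn \<gamma> - 3) @ Z1 \<eta> @ gp (g (g (g \<epsilon>))) (nn \<epsilon> - 3) @ w)"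
    and "valid_path Q0 Q1 s t (v, u @ gp (g \<gamma>) (nn \<gamma> - 3) @ Z1 \<eta> @ gp (g (g (g \<epsilon>))) (nn \<epsilon> - 3) @ w)"
    and "\<eta> \<in> Q1" and "nn (f \<epsilon>) = nn \<gamma>" and "\<gamma> \<in> Q1" and "\<epsilon> \<in> Q1"
proof -
  define \<delta> where "\<delta> = g \<eta>"
  define n where "n = nn \<gamma>"
  have gQ1: "\<gamma> \<in> Q1" using x unfolding \<gamma>_def by simp
  have eQ: "\<eta> \<in> Q1" using gQ1 unfolding \<eta>_def by simp
  have dQ: "\<delta> \<in> Q1" using eQ unfolding \<delta>_def by simp
  have epQ: "\<epsilon> \<in> Q1" using dQ unfolding \<epsilon>_def \<delta>_def by simp
  have n3: "3 \<le> n" using n_ge3[OF gQ1] unfolding n_def .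
  have gd: "g \<delta> = \<gamma>"
  proof -
    have "g \<delta> = (g ^^ Suc (Suc (n - 3))) (g \<gamma>)" unfolding \<delta>_def \<eta>_def n_def by simp
    also have "\<dots> = (g ^^ Suc (Suc (Suc (n - 3)))) \<gamma>" by (rule fps)
    also have "Suc (Suc (Suc (n - 3))) = n" using n3 by simp
    finally show ?thesis using gn[OF gQ1] unfolding n_def by simp
  qed
  have Blg: "Bl \<gamma> = gp (g \<gamma>) (n - 3) @ [\<eta>, \<delta>]"
  proof -
    have "n - 1 = Suc (Suc (n - 3))" using n3 by simp
    hence "Bl \<gamma> = gp (g \<gamma>) (Suc (Suc (n - 3)))" unfolding Bl_def n_def by simp
    also have "\<dots> = gp (g \<gamma>) (n - 3) @ [\<eta>, \<delta>]"
      unfolding gp_snoc \<delta>_def \<eta>_def n_def by simp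
    finally show ?thesis .
  qed
  have fd: "f \<delta> = g (f x)"
  proof (rule swap[OF dQ fQ[OF x]])
    show "t \<delta> = t (f x)" using sg[OF dQ] gd sf[OF fQ[OF x]] unfolding \<gamma>_def by simp
    show "\<delta> \<noteq> f x"
    proof
      assume "\<delta> = f x"
      hence "g (f x) = f (f x)" using gd unfolding \<gamma>_def by simp
      thus False using fneg[OF fQ[OF x]] by simp
    qed
  qed
  have fe: "f \<eta> = g \<epsilon>"
  proof (rule swap[OF eQ epQ])
    show "t \<eta> = t \<epsilon>" using sg[OF eQ] tff[OF dQ] unfolding \<epsilon>_def \<delta>_def by simp
    show "\<eta> \<noteq> \<epsilon>"
    proof
      assume ee: "\<eta> = \<epsilon>"
      have "f \<epsilon> = g \<eta>" using dQ unfolding \<epsilon>_def \<delta>_def by simp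
      hence "f \<eta> = g \<eta>" using ee by simp
      thus False using fneg[OF eQ] by simp
    qed
  qed
  have Ble: "Bl \<epsilon> = [g \<epsilon>, g (g \<epsilon>)] @ gp (g (g (g \<epsilon>))) (nn \<epsilon> - 3)"
  proof -
    have "nn \<epsilon> - 2 = Suc (nn \<epsilon> - 3)" using n_ge3[OF epQ] by simp
    thus ?thesis using Bl_hd[OF epQ] by (simp add: gp_Suc)
  qed
  have Flg: "Fl \<gamma> = [x, f x]" using x unfolding Fl_def \<gamma>_def by simp
  have fed: "f \<epsilon> = \<delta>" using dQ unfolding \<epsilon>_def \<delta>_def[symmetric] by simp
  have Fle: "Fl \<epsilon> = [\<delta>, g (f x)]" unfolding Fl_def fed fd ..
  have e1: "u @ Z1 x @ w = u @ Fl \<gamma> @ (g (f x) # w)" unfolding Flg Z1_def by simp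
  have r1: "Rel (v, u @ Z1 x @ w) (c \<gamma>) (v, u @ Bl \<gamma> @ (g (f x) # w))"
    unfolding e1 by (rule basic_rw[OF gQ1 v[unfolded e1]])
  have v1: "valid_path Q0 Q1 s t (v, u @ Bl \<gamma> @ (g (f x) # w))"
    by (rule valid_rw[OF gQ1 v[unfolded e1]])
  have e2: "u @ Bl \<gamma> @ (g (f x) # w) = (u @ gp (g \<gamma>) (n - 3) @ [\<eta>]) @ Fl \<epsilon> @ w"
    unfolding Blg Fle by simp
  have r2: "Rel (v, u @ Bl \<gamma> @ (g (f x) # w)) (c \<epsilon>) (v, (u @ gp (g \<gamma>) (n - 3) @ [\<eta>]) @ Bl \<epsilon> @ w)"
    unfolding e2 by (rule basic_rw[OF epQ v1[unfolded e2]])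
  have v2: "valid_path Q0 Q1 s t (v, (u @ gp (g \<gamma>) (n - 3) @ [\<eta>]) @ Bl \<epsilon> @ w)"
    by (rule valid_rw[OF epQ v1[unfolded e2]])
  have e3: "(u @ gp (g \<gamma>) (n - 3) @ [\<eta>]) @ Bl \<epsilon> @ w
      = u @ gp (g \<gamma>) (nn \<gamma> - 3) @ Z1 \<eta> @ gp (g (g (g \<epsilon>))) (nn \<epsilon> - 3) @ w"
    unfolding Ble Z1_def fe n_def by simp
  show "Rel (v, u @ Z1 x @ w) (c \<gamma> * c \<epsilon>)
            (v, u @ gp (g \<gamma>) (nn \<gamma> - 3) @ Z1 \<eta> @ gp (g (g (g \<epsilon>))) (nn \<epsilon> - 3) @ w)"
    using rel_trans[OF r1 r2] unfolding e3 .
  show "valid_path Q0 Q1 s t (v, u @ gp (g \<gamma>) (nn \<gamma> - 3) @ Z1 \<eta> @ gp (g (g (g \<epsilon>))) (nn \<epsilon> - 3) @ w)"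
    using v2 unfolding e3 .
  show "\<eta> \<in> Q1" "\<gamma> \<in> Q1" "\<epsilon> \<in> Q1" using eQ gQ1 epQ .
  have "f \<epsilon> = \<delta>" using dQ unfolding \<epsilon>_def \<delta>_def by simp
  hence "nn (f \<epsilon>) = nn \<eta>" unfolding \<delta>_def using n_step[OF eQ] by simp
  also have "\<dots> = nn \<gamma>" unfolding \<eta>_def using n_pow[OF gQ[OF gQ1]] n_step[OF gQ1] by simp
  finally show "nn (f \<epsilon>) = nn \<gamma>" .
qed

end

context TQ begin

lemma orbit_mem_eq: assumes y: "y \<in> Q1" and z: "z \<in> orbit g y" shows "orbit g z = orbit g y"
proof -
  obtain k where k: "z = (g ^^ k) y" using z unfolding orbit_def by auto
  have "orbit g ((g ^^ k) y) = orbit g y" for k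
  proof (induction k)
    case (Suc k)
    have "orbit g ((g ^^ Suc k) y) = orbit g (g ((g ^^ k) y))" by simp
    also have "\<dots> = orbit g ((g ^^ k) y)" using orbit_step_eq[OF gbij fin1] y by simp
    finally show ?case using Suc by simp
  qed simp
  thus ?thesis using k by simp
qed

lemma inset_eq: assumes y: "y \<in> Q1" shows "{a\<in>Q1. t a = t y} = {y, f (f (g y))}"
proof -
  have ne: "f (f (g y)) \<noteq> y"
  proof
    assume "f (f (g y)) = y"
    hence "f y = f (f (f (g y)))" by simp
    hence "f y = g y" using y by simp
    thus False using fneg[OF y] by simp
  qed
  have sub: "{y, f (f (g y))} \<subseteq> {a\<in>Q1. t a = t y}" using y by auto
  have c2: "card {a\<in>Q1. t a = t y} = 2" using in2 y by simp
  have "card {y, f (f (g y))} = 2" using ne by simp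
  moreover have "finite {a\<in>Q1. t a = t y}" using fin1 by simp
  ultimately show ?thesis using card_subset_eq[OF _ sub] c2 by simp
qed

lemma cover:
  assumes sub: "U \<subseteq> Q1" and x0: "x0 \<in> U" and cl: "\<forall>y\<in>U. f y \<in> U \<and> g y \<in> U"
  shows "Q1 \<subseteq> U"
proof -
  define VU where "VU = t ` U"
  have inU: "\<And>a. a \<in> Q1 \<Longrightarrow> t a \<in> VU \<Longrightarrow> a \<in> U"
  proof -
    fix a assume a: "a \<in> Q1" "t a \<in> VU"
    then obtain y where y: "y \<in> U" "t a = t y" unfolding VU_def by auto
    have yQ: "y \<in> Q1" using y sub by auto
    have "a \<in> {y, f (f (g y))}" using inset_eq[OF yQ] a y by auto
    thus "a \<in> U" using y cl by auto
  qed
  have outU: "\<And>a. a \<in> Q1 \<Longrightarrow> s a \<in> VU \<Longrightarrow> a \<in> U"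
  proof -
    fix a assume a: "a \<in> Q1" "s a \<in> VU"
    then obtain y where y: "y \<in> U" "s a = t y" unfolding VU_def by auto
    have yQ: "y \<in> Q1" using y sub by auto
    have "a \<in> {f y, g y}" using outset[OF yQ] a y by auto
    thus "a \<in> U" using y cl by auto
  qed
  have sU: "\<And>a. a \<in> U \<Longrightarrow> s a \<in> VU"
  proof -
    fix a assume a: "a \<in> U"
    hence "f (f a) \<in> U" using cl by auto
    moreover have "t (f (f a)) = s a" using a sub by auto
    ultimately show "s a \<in> VU" unfolding VU_def by force
  qed
  have u0: "t x0 \<in> Q0" using x0 sub by auto
  have reach: "\<And>v. (t x0, v) \<in> ({(s a, t a) | a. a \<in> Q1} \<union> {(t a, s a) | a. a \<in> Q1})\<^sup>* \<Longrightarrow> v \<in> VU"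
  proof -
    fix v assume "(t x0, v) \<in> ({(s a, t a) | a. a \<in> Q1} \<union> {(t a, s a) | a. a \<in> Q1})\<^sup>*"
    then show "v \<in> VU"
    proof induction
      case base then show ?case using x0 unfolding VU_def by auto
    next
      case (step v v')
      then obtain a where a: "a \<in> Q1" "(v = s a \<and> v' = t a) \<or> (v = t a \<and> v' = s a)" by auto
      from a(2) show ?case
      proof
        assume "v = s a \<and> v' = t a"
        hence "a \<in> U" using outU a step by auto
        thus ?case using \<open>v = s a \<and> v' = t a\<close> unfolding VU_def by auto
      next
        assume "v = t a \<and> v' = s a"
        hence "a \<in> U" using inU a step by auto
        thus ?case using \<open>v = t a \<and> v' = s a\<close> sU by auto
      qed
    qed
  qed
  show ?thesis
  proof
    fix a assume a: "a \<in> Q1"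
    have "t a \<in> Q0" using a by simp
    hence "t a \<in> VU" using reach conn u0 by blast
    thus "a \<in> U" using inU a by auto
  qed
qed

end

locale TQd = TQ +
  assumes dia: "\<forall>\<alpha>\<in>Q1. orbsize g \<alpha> = 3"
begin

lemma R1: "y \<in> Q1 \<Longrightarrow> f (f (f y)) = y" by simp
lemma R2: "y \<in> Q1 \<Longrightarrow> g (g (g y)) = y" using gn[of y] dia by (simp add: numeral_3_eq_3)
lemma R3: assumes y: "y \<in> Q1" shows "g (f (f (g y))) = f y"
proof -
  have ne: "f (f (g y)) \<noteq> y"
  proof
    assume "f (f (g y)) = y"
    hence "f y = f (f (f (g y)))" by simp
    hence "f y = g y" using y by simp
    thus False using fneg[OF y] by simp
  qed
  have "f y = g (f (f (g y)))" by (rule swap) (use y ne in auto)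
  thus ?thesis by simp
qed

lemma orbit3: assumes y: "y \<in> Q1" shows "orbit g y = {y, g y, g (g y)}"
proof -
  have "{0..<3::nat} = {0, 1, 2}" by auto
  thus ?thesis using gorbit[OF y] dia y by (simp add: numeral_2_eq_2)
qed

lemma fno: assumes y: "y \<in> Q1" shows "f y \<notin> orbit g y"
proof -
  have "f y \<noteq> y" using f_distinct[OF y] by simp
  moreover have "f y \<noteq> g y" using fneg[OF y] .
  moreover have "f y \<noteq> g (g y)"
  proof
    assume "f y = g (g y)"
    hence "t y = t (g y)" using sf[OF y] sg[OF gQ[OF y]] by metis
    hence "s (g y) = t (g y)" using sg[OF y] by simp
    thus False using noloop gQ[OF y] by blast
  qed
  ultimately show ?thesis unfolding orbit3[OF y] by simp
qed

lemma orb_distinct: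
  assumes z: "z \<in> Q1" and r: "r \<in> Q1" and zr: "z \<in> orbit g r" and fz: "f z \<in> orbit g r'" and r': "r' \<in> Q1"
  shows "orbit g r \<noteq> orbit g r'"
proof
  assume e: "orbit g r = orbit g r'"
  have "orbit g z = orbit g r" by (rule orbit_mem_eq[OF r zr])
  hence "f z \<in> orbit g z" using fz e by simp
  thus False using fno[OF z] by simp
qed

end

context TQ begin

lemma rep_of:
  assumes r: "r \<in> Q1"
  shows "\<exists>\<omega>. \<omega> \<in> \<Omega>g \<and> \<omega> \<in> orbit g r \<and> (\<forall>x. x \<in> \<Omega>g \<and> x \<in> orbit g r \<longrightarrow> x = \<omega>) \<and> c \<omega> = c r"
proof -
  have ex1: "\<exists>!\<omega>. \<omega> \<in> \<Omega>g \<and> \<omega> \<in> orbit g r" using repg r by (simp add: is_orbit_reps_def)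
  then obtain \<omega> where w: "\<omega> \<in> \<Omega>g" "\<omega> \<in> orbit g r" by auto
  have u: "\<forall>x. x \<in> \<Omega>g \<and> x \<in> orbit g r \<longrightarrow> x = \<omega>" using ex1 w by auto
  obtain k where "\<omega> = (g ^^ k) r" using w(2) unfolding orbit_def by auto
  hence "c \<omega> = c r" using c_pow[OF r] by simp
  thus ?thesis using w u by blast
qed

lemma orbit_disj:
  assumes r: "r \<in> Q1" "r' \<in> Q1" and d: "orbit g r \<noteq> orbit g r'" and z: "z \<in> orbit g r"
  shows "z \<notin> orbit g r'"
proof
  assume "z \<in> orbit g r'"
  hence "orbit g z = orbit g r'" by (rule orbit_mem_eq[OF r(2)])
  moreover have "orbit g z = orbit g r" by (rule orbit_mem_eq[OF r(1) z])
  ultimately show False using d by simp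
qed

lemma prod4:
  assumes q: "r1 \<in> Q1" "r2 \<in> Q1" "r3 \<in> Q1" "r4 \<in> Q1"
    and cov: "Q1 \<subseteq> orbit g r1 \<union> orbit g r2 \<union> orbit g r3 \<union> orbit g r4"
    and d12: "orbit g r1 \<noteq> orbit g r2" and d13: "orbit g r1 \<noteq> orbit g r3" and d14: "orbit g r1 \<noteq> orbit g r4"
    and d23: "orbit g r2 \<noteq> orbit g r3" and d24: "orbit g r2 \<noteq> orbit g r4" and d34: "orbit g r3 \<noteq> orbit g r4"
  shows "c r1 * c r2 * (c r3 * c r4) = (\<Prod>\<alpha>\<in>\<Omega>g. c \<alpha>)"
proof -
  obtain w1 where w1: "w1 \<in> \<Omega>g" "w1 \<in> orbit g r1" "\<forall>x. x \<in> \<Omega>g \<and> x \<in> orbit g r1 \<longrightarrow> x = w1" "c w1 = c r1"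
    using rep_of[OF q(1)] by blast
  obtain w2 where w2: "w2 \<in> \<Omega>g" "w2 \<in> orbit g r2" "\<forall>x. x \<in> \<Omega>g \<and> x \<in> orbit g r2 \<longrightarrow> x = w2" "c w2 = c r2"
    using rep_of[OF q(2)] by blast
  obtain w3 where w3: "w3 \<in> \<Omega>g" "w3 \<in> orbit g r3" "\<forall>x. x \<in> \<Omega>g \<and> x \<in> orbit g r3 \<longrightarrow> x = w3" "c w3 = c r3"
    using rep_of[OF q(3)] by blast
  obtain w4 where w4: "w4 \<in> \<Omega>g" "w4 \<in> orbit g r4" "\<forall>x. x \<in> \<Omega>g \<and> x \<in> orbit g r4 \<longrightarrow> x = w4" "c w4 = c r4"
    using rep_of[OF q(4)] by blast
  have n12: "w1 \<noteq> w2"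
  proof
    assume e: "w1 = w2"
    have "w1 \<notin> orbit g r2" by (rule orbit_disj[OF q(1) q(2) d12 w1(2)])
    thus False using w2(2) e by simp
  qed
  have n13: "w1 \<noteq> w3"
  proof
    assume e: "w1 = w3"
    have "w1 \<notin> orbit g r3" by (rule orbit_disj[OF q(1) q(3) d13 w1(2)])
    thus False using w3(2) e by simp
  qed
  have n14: "w1 \<noteq> w4"
  proof
    assume e: "w1 = w4"
    have "w1 \<notin> orbit g r4" by (rule orbit_disj[OF q(1) q(4) d14 w1(2)])
    thus False using w4(2) e by simp
  qed
  have n23: "w2 \<noteq> w3"
  proof
    assume e: "w2 = w3"
    have "w2 \<notin> orbit g r3" by (rule orbit_disj[OF q(2) q(3) d23 w2(2)])
    thus False using w3(2) e by simp
  qed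
  have n24: "w2 \<noteq> w4"
  proof
    assume e: "w2 = w4"
    have "w2 \<notin> orbit g r4" by (rule orbit_disj[OF q(2) q(4) d24 w2(2)])
    thus False using w4(2) e by simp
  qed
  have n34: "w3 \<noteq> w4"
  proof
    assume e: "w3 = w4"
    have "w3 \<notin> orbit g r4" by (rule orbit_disj[OF q(3) q(4) d34 w3(2)])
    thus False using w4(2) e by simp
  qed
  have O: "\<Omega>g = {w1, w2, w3, w4}"
  proof
    show "{w1, w2, w3, w4} \<subseteq> \<Omega>g" using w1(1) w2(1) w3(1) w4(1) by simp
    show "\<Omega>g \<subseteq> {w1, w2, w3, w4}"
    proof
      fix x assume x: "x \<in> \<Omega>g"
      hence "x \<in> Q1" using Og_sub by auto
      hence "x \<in> orbit g r1 \<or> x \<in> orbit g r2 \<or> x \<in> orbit g r3 \<or> x \<in> orbit g r4" using cov by auto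
      thus "x \<in> {w1, w2, w3, w4}"
      proof (elim disjE)
        assume "x \<in> orbit g r1" thus ?thesis using w1(3) x by simp
      next
        assume "x \<in> orbit g r2" thus ?thesis using w2(3) x by simp
      next
        assume "x \<in> orbit g r3" thus ?thesis using w3(3) x by simp
      next
        assume "x \<in> orbit g r4" thus ?thesis using w4(3) x by simp
      qed
    qed
  qed
  have "(\<Prod>\<alpha>\<in>\<Omega>g. c \<alpha>) = c w1 * (c w2 * (c w3 * c w4))"
    unfolding O using n12 n13 n14 n23 n24 n34 by simp
  thus ?thesis using w1(4) w2(4) w3(4) w4(4) by (simp add: mult.assoc)
qed

end

context TQd begin

lemma dia_prod: assumes x: "x \<in> Q1"
  shows "c (f (f x)) * c (f (f (g (g (f (f x)))))) * (c (f (f (g (f (f x))))) * c (f (f (g (g (f (f (g (f (f x)))))))))) = (\<Prod>\<alpha>\<in>\<Omega>g. c \<alpha>)"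
proof -
  have cl_g1_0: "f (f (f x)) = g (f (f (g (f (f x)))))"
    by (simp only: R3[of "f (f x)"] fQ gQ x)
  have cl_g1_1: "f (g (f (f x))) = g (f (f (g (g (f (f x))))))"
    by (simp only: R3[of "g (f (f x))"] fQ gQ x)
  have cl_g1_2: "f (g (g (f (f x)))) = g (g (f (f (g (g (f (f (g (f (f x))))))))))"
  proof -
    have "f (g (g (f (f x)))) = g (f (f (g (g (g (f (f x)))))))" by (simp only: R3[of "g (g (f (f x)))"] fQ gQ x)
    also have "\<dots> = g (f (f (f (f x))))" by (simp only: R2[of "f (f x)"] fQ gQ x)
    also have "\<dots> = g (g (f (f (g (f (f (f x)))))))" by (simp only: R3[of "f (f (f x))"] fQ gQ x)
    also have "\<dots> = g (g (f (f (g (g (f (f (g (f (f x))))))))))" by (simp only: R3[of "f (f x)"] fQ gQ x)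
    finally show ?thesis .
  qed
  have cl_e1_0: "f (f (f (g (g (f (f x)))))) = g (g (f (f x)))"
    by (simp only: R1[of "g (g (f (f x)))"] fQ gQ x)
  have cl_e1_1: "f (g (f (f (g (g (f (f x))))))) = f (f (g (f (f x))))"
    by (simp only: R3[of "g (f (f x))"] fQ gQ x)
  have cl_e1_2: "f (g (g (f (f (g (g (f (f x)))))))) = f (f (g (g (f (f (g (f (f x))))))))"
  proof -
    have "f (g (g (f (f (g (g (f (f x)))))))) = f (f (f (f (g (g (f (f (g (g (f (f x)))))))))))" by (simp only: R1[of "f (g (g (f (f (g (g (f (f x))))))))"] fQ gQ x)
    also have "\<dots> = f (f (f (f (g (f (g (f (f x))))))))" by (simp only: R3[of "g (f (f x))"] fQ gQ x)
    also have "\<dots> = f (f (g (g (g (f (f (g (f (g (f (f x)))))))))))" by (simp only: R2[of "f (f (g (f (g (f (f x))))))"] fQ gQ x)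
    also have "\<dots> = f (f (g (g (f (f (g (f (f x))))))))" by (simp only: R3[of "f (g (f (f x)))"] fQ gQ x)
    finally show ?thesis .
  qed
  have cl_g2_0: "f (f (f (g (f (f x))))) = g (f (f x))"
    by (simp only: R1[of "g (f (f x))"] fQ gQ x)
  have cl_g2_1: "f (g (f (f (g (f (f x)))))) = g (f (f (g (g (f (f (g (f (f x)))))))))"
    by (simp only: R3[of "g (f (f (g (f (f x)))))"] fQ gQ x)
  have cl_g2_2: "f (g (g (f (f (g (f (f x))))))) = g (g (f (f (g (g (f (f x)))))))"
  proof -
    have "f (g (g (f (f (g (f (f x))))))) = g (f (f (g (g (g (f (f (g (f (f x))))))))))" by (simp only: R3[of "g (g (f (f (g (f (f x))))))"] fQ gQ x)
    also have "\<dots> = g (f (f (f (f (g (f (f x)))))))" by (simp only: R2[of "f (f (g (f (f x))))"] fQ gQ x)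
    also have "\<dots> = g (f (g (f (f x))))" by (simp only: R1[of "f (g (f (f x)))"] fQ gQ x)
    also have "\<dots> = g (g (f (f (g (g (f (f x)))))))" by (simp only: R3[of "g (f (f x))"] fQ gQ x)
    finally show ?thesis .
  qed
  have cl_e2_0: "f (f (f (g (g (f (f (g (f (f x))))))))) = g (g (f (f (g (f (f x))))))"
    by (simp only: R1[of "g (g (f (f (g (f (f x))))))"] fQ gQ x)
  have cl_e2_1: "f (g (f (f (g (g (f (f (g (f (f x)))))))))) = f (f x)"
  proof -
    have "f (g (f (f (g (g (f (f (g (f (f x)))))))))) = f (f (g (f (f (g (f (f x)))))))" by (simp only: R3[of "g (f (f (g (f (f x)))))"] fQ gQ x)
    also have "\<dots> = f (f (f (f (f x))))" by (simp only: R3[of "f (f x)"] fQ gQ x)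
    also have "\<dots> = f (f x)" by (simp only: R1[of "f (f x)"] fQ gQ x)
    finally show ?thesis .
  qed
  have cl_e2_2: "f (g (g (f (f (g (g (f (f (g (f (f x))))))))))) = f (f (g (g (f (f x)))))"
  proof -
    have "f (g (g (f (f (g (g (f (f (g (f (f x))))))))))) = f (g (f (g (f (f (g (f (f x))))))))" by (simp only: R3[of "g (f (f (g (f (f x)))))"] fQ gQ x)
    also have "\<dots> = f (g (f (g (f (f (g (g (g (g (f (f x)))))))))))" by (simp only: R2[of "g (f (f x))"] fQ gQ x)
    also have "\<dots> = f (g (f (f (g (g (g (f (f x))))))))" by (simp only: R3[of "g (g (g (f (f x))))"] fQ gQ x)
    also have "\<dots> = f (f (g (g (f (f x)))))" by (simp only: R3[of "g (g (f (f x)))"] fQ gQ x)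
    finally show ?thesis .
  qed
  have q1: "f (f x) \<in> Q1" using x by simp
  have q2: "f (f (g (g (f (f x))))) \<in> Q1" using x by simp
  have q3: "f (f (g (f (f x)))) \<in> Q1" using x by simp
  have q4: "f (f (g (g (f (f (g (f (f x)))))))) \<in> Q1" using x by simp
  have o1: "orbit g (f (f x)) = {f (f x), g (f (f x)), g (g (f (f x)))}" by (rule orbit3[OF q1])
  have o2: "orbit g (f (f (g (g (f (f x)))))) = {f (f (g (g (f (f x))))), g (f (f (g (g (f (f x)))))), g (g (f (f (g (g (f (f x)))))))}" by (rule orbit3[OF q2])
  have o3: "orbit g (f (f (g (f (f x))))) = {f (f (g (f (f x)))), g (f (f (g (f (f x))))), g (g (f (f (g (f (f x))))))}" by (rule orbit3[OF q3])
  have o4: "orbit g (f (f (g (g (f (f (g (f (f x))))))))) = {f (f (g (g (f (f (g (f (f x)))))))), g (f (f (g (g (f (f (g (f (f x))))))))), g (g (f (f (g (g (f (f (g (f (f x))))))))))}" by (rule orbit3[OF q4])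
  define U where "U = orbit g (f (f x)) \<union> orbit g (f (f (g (g (f (f x)))))) \<union> orbit g (f (f (g (f (f x))))) \<union> orbit g (f (f (g (g (f (f (g (f (f x)))))))))"
  have Uel: "U = {f (f x), g (f (f x)), g (g (f (f x))), f (f (g (g (f (f x))))), g (f (f (g (g (f (f x)))))), g (g (f (f (g (g (f (f x))))))), f (f (g (f (f x)))), g (f (f (g (f (f x))))), g (g (f (f (g (f (f x)))))), f (f (g (g (f (f (g (f (f x)))))))), g (f (f (g (g (f (f (g (f (f x))))))))), g (g (f (f (g (g (f (f (g (f (f x))))))))))}" unfolding U_def o1 o2 o3 o4 by auto
  have Usub: "U \<subseteq> Q1" unfolding Uel using x by simp
  have fc_g1_0: "f (f (f x)) \<in> U" unfolding cl_g1_0 Uel by simp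
  have fc_g1_1: "f (g (f (f x))) \<in> U" unfolding cl_g1_1 Uel by simp
  have fc_g1_2: "f (g (g (f (f x)))) \<in> U" unfolding cl_g1_2 Uel by simp
  have fc_e1_0: "f (f (f (g (g (f (f x)))))) \<in> U" unfolding cl_e1_0 Uel by simp
  have fc_e1_1: "f (g (f (f (g (g (f (f x))))))) \<in> U" unfolding cl_e1_1 Uel by simp
  have fc_e1_2: "f (g (g (f (f (g (g (f (f x)))))))) \<in> U" unfolding cl_e1_2 Uel by simp
  have fc_g2_0: "f (f (f (g (f (f x))))) \<in> U" unfolding cl_g2_0 Uel by simp
  have fc_g2_1: "f (g (f (f (g (f (f x)))))) \<in> U" unfolding cl_g2_1 Uel by simp
  have fc_g2_2: "f (g (g (f (f (g (f (f x))))))) \<in> U" unfolding cl_g2_2 Uel by simp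
  have fc_e2_0: "f (f (f (g (g (f (f (g (f (f x))))))))) \<in> U" unfolding cl_e2_0 Uel by simp
  have fc_e2_1: "f (g (f (f (g (g (f (f (g (f (f x)))))))))) \<in> U" unfolding cl_e2_1 Uel by simp
  have fc_e2_2: "f (g (g (f (f (g (g (f (f (g (f (f x))))))))))) \<in> U" unfolding cl_e2_2 Uel by simp
  have gc_g1_1: "g (f (f x)) \<in> U" unfolding Uel by simp
  have gc_g1_2: "g (g (f (f x))) \<in> U" unfolding Uel by simp
  have gc_g1_3: "g (g (g (f (f x)))) \<in> U" unfolding Uel R2[OF q1] by simp
  have gc_e1_1: "g (f (f (g (g (f (f x)))))) \<in> U" unfolding Uel by simp
  have gc_e1_2: "g (g (f (f (g (g (f (f x))))))) \<in> U" unfolding Uel by simp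
  have gc_e1_3: "g (g (g (f (f (g (g (f (f x)))))))) \<in> U" unfolding Uel R2[OF q2] by simp
  have gc_g2_1: "g (f (f (g (f (f x))))) \<in> U" unfolding Uel by simp
  have gc_g2_2: "g (g (f (f (g (f (f x)))))) \<in> U" unfolding Uel by simp
  have gc_g2_3: "g (g (g (f (f (g (f (f x))))))) \<in> U" unfolding Uel R2[OF q3] by simp
  have gc_e2_1: "g (f (f (g (g (f (f (g (f (f x))))))))) \<in> U" unfolding Uel by simp
  have gc_e2_2: "g (g (f (f (g (g (f (f (g (f (f x)))))))))) \<in> U" unfolding Uel by simp
  have gc_e2_3: "g (g (g (f (f (g (g (f (f (g (f (f x))))))))))) \<in> U" unfolding Uel R2[OF q4] by simp
  have clos: "\<forall>y\<in>U. f y \<in> U \<and> g y \<in> U"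
  proof
    fix y assume "y \<in> U"
    hence "y = f (f x) \<or> y = g (f (f x)) \<or> y = g (g (f (f x))) \<or> y = f (f (g (g (f (f x))))) \<or> y = g (f (f (g (g (f (f x)))))) \<or> y = g (g (f (f (g (g (f (f x))))))) \<or> y = f (f (g (f (f x)))) \<or> y = g (f (f (g (f (f x))))) \<or> y = g (g (f (f (g (f (f x)))))) \<or> y = f (f (g (g (f (f (g (f (f x)))))))) \<or> y = g (f (f (g (g (f (f (g (f (f x))))))))) \<or> y = g (g (f (f (g (g (f (f (g (f (f x))))))))))" unfolding Uel by simp
    then show "f y \<in> U \<and> g y \<in> U" by (elim disjE; simp only: fc_g1_0 fc_g1_1 fc_g1_2 fc_e1_0 fc_e1_1 fc_e1_2 fc_g2_0 fc_g2_1 fc_g2_2 fc_e2_0 fc_e2_1 fc_e2_2 gc_g1_1 gc_g1_2 gc_g1_3 gc_e1_1 gc_e1_2 gc_e1_3 gc_g2_1 gc_g2_2 gc_g2_3 gc_e2_1 gc_e2_2 gc_e2_3 simp_thms)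
  qed
  have r1U: "f (f x) \<in> U" unfolding Uel by simp
  have cov: "Q1 \<subseteq> U" by (rule cover[OF Usub r1U clos])
  have d_g1_g2: "orbit g (f (f x)) \<noteq> orbit g (f (f (g (f (f x)))))"
  proof (rule orb_distinct)
    show "f (f x) \<in> orbit g (f (f x))" unfolding o1 by simp
    show "f (f (f x)) \<in> orbit g (f (f (g (f (f x)))))" unfolding o3 cl_g1_0 by simp
  qed (use x in simp_all)
  have d_g2_g1: "orbit g (f (f (g (f (f x))))) \<noteq> orbit g (f (f x))" using d_g1_g2 by metis
  have d_g1_e1: "orbit g (f (f x)) \<noteq> orbit g (f (f (g (g (f (f x))))))"
  proof (rule orb_distinct)
    show "g (f (f x)) \<in> orbit g (f (f x))" unfolding o1 by simp
    show "f (g (f (f x))) \<in> orbit g (f (f (g (g (f (f x))))))" unfolding o2 cl_g1_1 by simp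
  qed (use x in simp_all)
  have d_e1_g1: "orbit g (f (f (g (g (f (f x)))))) \<noteq> orbit g (f (f x))" using d_g1_e1 by metis
  have d_g1_e2: "orbit g (f (f x)) \<noteq> orbit g (f (f (g (g (f (f (g (f (f x)))))))))"
  proof (rule orb_distinct)
    show "g (g (f (f x))) \<in> orbit g (f (f x))" unfolding o1 by simp
    show "f (g (g (f (f x)))) \<in> orbit g (f (f (g (g (f (f (g (f (f x)))))))))" unfolding o4 cl_g1_2 by simp
  qed (use x in simp_all)
  have d_e2_g1: "orbit g (f (f (g (g (f (f (g (f (f x))))))))) \<noteq> orbit g (f (f x))" using d_g1_e2 by metis
  have d_e1_g2: "orbit g (f (f (g (g (f (f x)))))) \<noteq> orbit g (f (f (g (f (f x)))))"
  proof (rule orb_distinct)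
    show "g (f (f (g (g (f (f x)))))) \<in> orbit g (f (f (g (g (f (f x))))))" unfolding o2 by simp
    show "f (g (f (f (g (g (f (f x))))))) \<in> orbit g (f (f (g (f (f x)))))" unfolding o3 cl_e1_1 by simp
  qed (use x in simp_all)
  have d_g2_e1: "orbit g (f (f (g (f (f x))))) \<noteq> orbit g (f (f (g (g (f (f x))))))" using d_e1_g2 by metis
  have d_e1_e2: "orbit g (f (f (g (g (f (f x)))))) \<noteq> orbit g (f (f (g (g (f (f (g (f (f x)))))))))"
  proof (rule orb_distinct)
    show "g (g (f (f (g (g (f (f x))))))) \<in> orbit g (f (f (g (g (f (f x))))))" unfolding o2 by simp
    show "f (g (g (f (f (g (g (f (f x)))))))) \<in> orbit g (f (f (g (g (f (f (g (f (f x)))))))))" unfolding o4 cl_e1_2 by simp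
  qed (use x in simp_all)
  have d_e2_e1: "orbit g (f (f (g (g (f (f (g (f (f x))))))))) \<noteq> orbit g (f (f (g (g (f (f x))))))" using d_e1_e2 by metis
  have d_g2_e2: "orbit g (f (f (g (f (f x))))) \<noteq> orbit g (f (f (g (g (f (f (g (f (f x)))))))))"
  proof (rule orb_distinct)
    show "g (f (f (g (f (f x))))) \<in> orbit g (f (f (g (f (f x)))))" unfolding o3 by simp
    show "f (g (f (f (g (f (f x)))))) \<in> orbit g (f (f (g (g (f (f (g (f (f x)))))))))" unfolding o4 cl_g2_1 by simp
  qed (use x in simp_all)
  have d_e2_g2: "orbit g (f (f (g (g (f (f (g (f (f x))))))))) \<noteq> orbit g (f (f (g (f (f x)))))" using d_g2_e2 by metis
  have cov2: "Q1 \<subseteq> orbit g (f (f x)) \<union> orbit g (f (f (g (g (f (f x)))))) \<union> orbit g (f (f (g (f (f x))))) \<union> orbit g (f (f (g (g (f (f (g (f (f x)))))))))" using cov unfolding U_def .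
  show ?thesis by (rule prod4[OF q1 q2 q3 q4 cov2 d_g1_e1 d_g1_g2 d_g1_e2 d_e1_g2 d_e1_e2 d_g2_e2])
qed

end

context TQ begin

lemma star_grow:
  assumes star: "\<forall>\<alpha>\<in>Q1. orbsize g \<alpha> \<ge> 4 \<or> orbsize g (f \<alpha>) \<ge> 4"
  shows "\<forall>x u w v. x \<in> Q1 \<longrightarrow> valid_path Q0 Q1 s t (v, u @ Z1 x @ w) \<longrightarrow>
     (\<exists>k P'. Rel (v, u @ Z1 x @ w) k P' \<and> N + length u + length w \<le> length (snd P'))"
proof (induction N)
  case 0
  show ?case
  proof (intro allI impI)
    fix x u w v
    show "\<exists>k P'. Rel (v, u @ Z1 x @ w) k P' \<and> 0 + length u + length w \<le> length (snd P')"
      using rel_refl by force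
  qed
next
  case (Suc N)
  show ?case
  proof (intro allI impI)
    fix x u w v
    assume x: "x \<in> Q1" and v: "valid_path Q0 Q1 s t (v, u @ Z1 x @ w)"
    note ch = chain[OF x v]
    define \<gamma> where "\<gamma> = f (f x)"
    define \<eta> where "\<eta> = (g ^^ (nn \<gamma> - 3)) (g \<gamma>)"
    define \<epsilon> where "\<epsilon> = f (f (g \<eta>))"
    define u1 where "u1 = u @ gp (g \<gamma>) (nn \<gamma> - 3)"
    define w1 where "w1 = gp (g (g (g \<epsilon>))) (nn \<epsilon> - 3) @ w"
    have r1: "Rel (v, u @ Z1 x @ w) (c \<gamma> * c \<epsilon>) (v, u1 @ Z1 \<eta> @ w1)"
      using ch(1) unfolding u1_def w1_def \<epsilon>_def \<eta>_def \<gamma>_def by simp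
    have v1: "valid_path Q0 Q1 s t (v, u1 @ Z1 \<eta> @ w1)"
      using ch(2) unfolding u1_def w1_def \<epsilon>_def \<eta>_def \<gamma>_def by simp
    have eQ: "\<eta> \<in> Q1" using ch(3) unfolding \<eta>_def \<gamma>_def by simp
    have nf: "nn (f \<epsilon>) = nn \<gamma>" using ch(4) unfolding \<epsilon>_def \<eta>_def \<gamma>_def by simp
    have gQ1: "\<gamma> \<in> Q1" and epQ: "\<epsilon> \<in> Q1" using ch(5,6) unfolding \<epsilon>_def \<eta>_def \<gamma>_def by simp_all
    have g3: "3 \<le> nn \<gamma>" "3 \<le> nn \<epsilon>" using n_ge3 gQ1 epQ by auto
    have "4 \<le> nn \<epsilon> \<or> 4 \<le> nn (f \<epsilon>)" using star epQ by auto
    hence grow: "length u + length w + 1 \<le> length u1 + length w1"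
      using g3 nf unfolding u1_def w1_def by auto
    obtain k P' where r2: "Rel (v, u1 @ Z1 \<eta> @ w1) k P'" and l: "N + length u1 + length w1 \<le> length (snd P')"
      using Suc.IH eQ v1 by blast
    show "\<exists>k P'. Rel (v, u @ Z1 x @ w) k P' \<and> Suc N + length u + length w \<le> length (snd P')"
      using rel_trans[OF r1 r2] l grow by (intro exI[of _ "c \<gamma> * c \<epsilon> * k"] exI[of _ P']) auto
  qed
qed

lemma van_Z1:
  assumes cond: "(\<forall>\<alpha>\<in>Q1. orbsize g \<alpha> \<ge> 4 \<or> orbsize g (f \<alpha>) \<ge> 4)
             \<or> ((\<forall>\<alpha>\<in>Q1. orbsize g \<alpha> = 3) \<and> (\<Prod>\<alpha>\<in>\<Omega>g. c \<alpha>) \<noteq> 1)"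
    and x: "x \<in> Q1" and v: "valid_path Q0 Q1 s t (v, u @ Z1 x @ w)"
  shows "van (v, u @ Z1 x @ w)"
  using cond
proof
  assume star: "\<forall>\<alpha>\<in>Q1. orbsize g \<alpha> \<ge> 4 \<or> orbsize g (f \<alpha>) \<ge> 4"
  show ?thesis unfolding van_def
  proof
    fix N
    obtain k P' where r: "Rel (v, u @ Z1 x @ w) k P'" and l: "N + length u + length w \<le> length (snd P')"
      using star_grow[OF star, of N] x v by blast
    have "N \<le> length (snd P')" using l by simp
    thus "\<exists>k P'. Rel (v, u @ Z1 x @ w) k P' \<and> N \<le> length (snd P')" using r by blast
  qed
next
  assume d: "(\<forall>\<alpha>\<in>Q1. orbsize g \<alpha> = 3) \<and> (\<Prod>\<alpha>\<in>\<Omega>g. c \<alpha>) \<noteq> 1"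
  interpret TQd Q0 Q1 s t f g c \<Omega>f \<Omega>g by unfold_locales (use d in blast)
  have n3: "\<And>a. a \<in> Q1 \<Longrightarrow> nn a = 3" using d by blast
  note ch1 = chain[OF x v]
  have xg: "f (f x) \<in> Q1" using x by simp
  have e1: "(g ^^ (nn (f (f x)) - 3)) (g (f (f x))) = g (f (f x))" using n3[OF xg] by simp
  have z1: "nn (f (f (g (g (f (f x)))))) - 3 = 0" using n3 x by simp
  have r1: "Rel (v, u @ Z1 x @ w) (c (f (f x)) * c (f (f (g (g (f (f x)))))))
      (v, u @ Z1 (g (f (f x))) @ w)"
    using ch1(1) unfolding e1 z1 using n3[OF xg] by (simp add: gp_def)
  have v1: "valid_path Q0 Q1 s t (v, u @ Z1 (g (f (f x))) @ w)"
    using ch1(2) unfolding e1 z1 using n3[OF xg] by (simp add: gp_def)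
  have eQ: "g (f (f x)) \<in> Q1" using x by simp
  note ch2 = chain[OF eQ v1]
  have yg: "f (f (g (f (f x)))) \<in> Q1" using x by simp
  have e2: "(g ^^ (nn (f (f (g (f (f x))))) - 3)) (g (f (f (g (f (f x)))))) = x"
    using n3[OF yg] R3[OF xg] x by simp
  have z2: "nn (f (f (g (x)))) - 3 = 0" using n3 x by simp
  have r2: "Rel (v, u @ Z1 (g (f (f x))) @ w) (c (f (f (g (f (f x))))) * c (f (f (g (g (f (f (g (f (f x)))))))))) (v, u @ Z1 x @ w)"
  proof -
    have "Rel (v, u @ Z1 (g (f (f x))) @ w) (c (f (f (g (f (f x))))) * c (f (f (g x))))
       (v, u @ gp (g (f (f (g (f (f x)))))) (nn (f (f (g (f (f x))))) - 3) @ Z1 x @ gp (g (g (g (f (f (g x)))))) (nn (f (f (g x))) - 3) @ w)"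
      using ch2(1) unfolding e2 .
    moreover have "f (f (g x)) = f (f (g (g (f (f (g (f (f x))))))))"
    proof -
      have "g (g (f (f (g (f (f x)))))) = g (f (f (f x)))" using R3[OF xg] by simp
      thus ?thesis using x by simp
    qed
    ultimately show ?thesis using n3[OF yg] z2 by (simp add: gp_def)
  qed
  have "Rel (v, u @ Z1 x @ w) (c (f (f x)) * c (f (f (g (g (f (f x)))))) *
      (c (f (f (g (f (f x))))) * c (f (f (g (g (f (f (g (f (f x)))))))))))  (v, u @ Z1 x @ w)"
    by (rule rel_trans[OF r1 r2])
  thus ?thesis unfolding dia_prod[OF x] using d by (intro van_self) auto
qed

end

theorem lemma4p1:
  fixes Q0 :: "'v set" and Q1 :: "'a set" and s t :: "'a \<Rightarrow> 'v"
    and f g :: "'a \<Rightarrow> 'a" and c :: "'a \<Rightarrow> 'k::field"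
    and \<Omega>f \<Omega>g :: "'a set"
  assumes fin0: "finite Q0" and fin1: "finite Q1"
    and st: "\<forall>a\<in>Q1. s a \<in> Q0 \<and> t a \<in> Q0"
    and conn: "\<forall>u\<in>Q0. \<forall>v\<in>Q0. (u, v) \<in> ({(s a, t a) | a. a \<in> Q1} \<union> {(t a, s a) | a. a \<in> Q1})\<^sup>*"
    and noloop: "\<forall>a\<in>Q1. s a \<noteq> t a"
    and no2cyc: "\<forall>a\<in>Q1. \<forall>b\<in>Q1. \<not> (s a = t b \<and> t a = s b)"
    and out2: "\<forall>v\<in>Q0. card {a\<in>Q1. s a = v} = 2"
    and in2: "\<forall>v\<in>Q0. card {a\<in>Q1. t a = v} = 2"
    and fbij: "bij_betw f Q1 Q1" and gbij: "bij_betw g Q1 Q1"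
    and fg: "\<forall>\<alpha>\<in>Q1. {f \<alpha>, g \<alpha>} = {\<beta>\<in>Q1. s \<beta> = t \<alpha>}"
    and f3: "\<forall>\<alpha>\<in>Q1. f (f (f \<alpha>)) = \<alpha>"
    and cnz: "\<forall>\<alpha>\<in>Q1. c \<alpha> \<noteq> 0"
    and cconst: "\<forall>\<alpha>\<in>Q1. c (g \<alpha>) = c \<alpha>"
    and repf: "is_orbit_reps f Q1 \<Omega>f"
    and repg: "is_orbit_reps g Q1 \<Omega>g"
    and cond: "(\<forall>\<alpha>\<in>Q1. orbsize g \<alpha> \<ge> 4 \<or> orbsize g (f \<alpha>) \<ge> 4)
             \<or> ((\<forall>\<alpha>\<in>Q1. orbsize g \<alpha> = 3) \<and> (\<Prod>\<alpha>\<in>\<Omega>g. c \<alpha>) \<noteq> 1)"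
    and \<alpha>: "\<alpha> \<in> Q1"
  shows "mon (s \<alpha>, [\<alpha>, f \<alpha>, f (f \<alpha>), \<alpha>])
           \<in> jac_kernel Q0 Q1 s t (potential s f g c \<Omega>f \<Omega>g)
       \<and> mon (s \<alpha>, gcycle g \<alpha> @ [\<alpha>])
           \<in> jac_kernel Q0 Q1 s t (potential s f g c \<Omega>f \<Omega>g)"
proof -
  interpret TQ Q0 Q1 s t f g c \<Omega>f \<Omega>g
    by unfold_locales (use fin1 st conn noloop no2cyc out2 in2 fbij gbij fg f3 cnz cconst repf repg in auto)
  have fa: "f \<alpha> \<in> Q1" using \<alpha> by simp
  have P1: "[\<alpha>, f \<alpha>, f (f \<alpha>), \<alpha>] = [\<alpha>, f \<alpha>] @ Fl (f \<alpha>) @ []" using \<alpha> by (simp add: Fl_def)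
  have vP1: "valid_path Q0 Q1 s t (s \<alpha>, [\<alpha>, f \<alpha>, f (f \<alpha>), \<alpha>])" using \<alpha> by (simp add: valid_path_def)
  have ra: "Rel (s \<alpha>, [\<alpha>, f \<alpha>, f (f \<alpha>), \<alpha>]) (c (f \<alpha>)) (s \<alpha>, [\<alpha>, f \<alpha>] @ Bl (f \<alpha>) @ [])"
    unfolding P1 by (rule basic_rw[OF fa vP1[unfolded P1]])
  have va: "valid_path Q0 Q1 s t (s \<alpha>, [\<alpha>, f \<alpha>] @ Bl (f \<alpha>) @ [])"
    by (rule valid_rw[OF fa vP1[unfolded P1]])
  have Pa: "[\<alpha>, f \<alpha>] @ Bl (f \<alpha>) @ [] = [] @ Z1 \<alpha> @ gp (g (g (f \<alpha>))) (nn (f \<alpha>) - 2)"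
    unfolding Bl_hd[OF fa] Z1_def by simp
  have "van (s \<alpha>, [] @ Z1 \<alpha> @ gp (g (g (f \<alpha>))) (nn (f \<alpha>) - 2))"
    by (rule van_Z1[OF cond \<alpha> va[unfolded Pa]])
  hence van1: "van (s \<alpha>, [\<alpha>, f \<alpha>, f (f \<alpha>), \<alpha>])" using van_rel[OF ra] unfolding Pa by simp
  have P2: "[\<alpha>, f \<alpha>, f (f \<alpha>), \<alpha>] = [\<alpha>] @ Fl \<alpha> @ [\<alpha>]" by (simp add: Fl_def)
  have rb: "Rel (s \<alpha>, [\<alpha>, f \<alpha>, f (f \<alpha>), \<alpha>]) (c \<alpha>) (s \<alpha>, [\<alpha>] @ Bl \<alpha> @ [\<alpha>])"
    unfolding P2 by (rule basic_rw[OF \<alpha> vP1[unfolded P2]])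
  have "gcycle g \<alpha> @ [\<alpha>] = [\<alpha>] @ Bl \<alpha> @ [\<alpha>]" using gcycle_Bl[OF \<alpha>] by simp
  hence rb': "Rel (s \<alpha>, gcycle g \<alpha> @ [\<alpha>]) (1 / c \<alpha>) (s \<alpha>, [\<alpha>, f \<alpha>, f (f \<alpha>), \<alpha>])"
    using rel_sym[OF rb] cnz \<alpha> by simp
  have van2: "van (s \<alpha>, gcycle g \<alpha> @ [\<alpha>])" by (rule van_rel[OF rb' van1])
  show ?thesis unfolding jac_kernel_def using van_closure[OF van1] van_closure[OF van2] by simp
qed


end
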